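(* Let $R>0$, $B_R(0)=\{x\in\mathbb{R}^N:|x|<R\}$, and assume $\int_0^1 t\,p(t)\,dt<+\infty$ and $\mu>0$. Then the problem $$-\Delta u=p(R-|x|)g(u)+1+\mu|\nabla u|\ \text{in }B_R(0),\quad u>0\ \text{in }B_R(0),\quad u=0\ \text{on }|x|=R$$ has at least one (radially symmetric) solution $u\in C^2(B_R(0))\cap C(\overline{B_R(0)})$.
   Context: $N\ge2$. The function $g\in C^1(0,\infty)$ is positive and decreasing with $\lim_{t\to0^+}g(t)=+\infty$. The function $p:(0,+\infty)\to(0,+\infty)$ is nonincreasing and Hölder continuous. *)

theory Defs
  imports "HOL-Analysis.Analysis"
begin

definition loc_hoelder_pos :: "(real \<Rightarrow> real) \<Rightarrow> bool" where
  "loc_hoelder_pos p \<longleftrightarrow>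
     (\<forall>a b. 0 < a \<and> a \<le> b \<longrightarrow>
        (\<exists>\<alpha> C. 0 < \<alpha> \<and> \<alpha> \<le> 1 \<and> 0 \<le> C \<and>
           (\<forall>s\<in>{a..b}. \<forall>t\<in>{a..b}. \<bar>p s - p t\<bar> \<le> C * \<bar>s - t\<bar> powr \<alpha>)))"

text \<open>Laplacian as the trace of the Hessian matrix.\<close>
definition trace_mat :: "real^'n^'n \<Rightarrow> real" where
  "trace_mat H = (\<Sum>i\<in>UNIV. H $ i $ i)"

end

theory Submission
  imports Defs
begin


locale rad =
  fixes g g' p :: "real \<Rightarrow> real" and R \<mu> :: real and N :: nat
  assumes N2: "N \<ge> 2"
    and gder: "\<And>t. t > 0 \<Longrightarrow> (g has_real_derivative g' t) (at t)"
    and g'cont: "continuous_on {0<..} g'"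
    and gpos: "\<And>t. t > 0 \<Longrightarrow> g t > 0"
    and gdecr: "\<And>s t. 0 < s \<Longrightarrow> s \<le> t \<Longrightarrow> g t \<le> g s"
    and ppos: "\<And>t. t > 0 \<Longrightarrow> p t > 0"
    and pdecr: "\<And>s t. 0 < s \<Longrightarrow> s \<le> t \<Longrightarrow> p t \<le> p s"
    and pcont: "continuous_on {0<..} p"
    and Rpos: "R > 0"
    and mupos: "\<mu> > 0"
    and pint: "(\<lambda>t. t * p t) integrable_on {0..1}"
begin

definition rho :: "real \<Rightarrow> real" where "rho t = t ^ (N - 1) * exp (- \<mu> * t)"

lemma rho_pos: "t > 0 \<Longrightarrow> rho t > 0"
  by (simp add: rho_def)

lemma rho_nonneg: "t \<ge> 0 \<Longrightarrow> rho t \<ge> 0"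
  by (simp add: rho_def)

lemma rho_0[simp]: "rho 0 = 0"
  using N2 by (simp add: rho_def)

lemma rho_cont: "continuous_on S rho"
  unfolding rho_def by (intro continuous_intros)

lemma rho_isCont: "isCont rho t"
  unfolding rho_def by (intro continuous_intros)

lemma rho_deriv: assumes "t > 0"
  shows "(rho has_real_derivative rho t * ((real N - 1) / t - \<mu>)) (at t)"
proof -
  obtain k where k: "N = Suc (Suc k)" using N2 by (metis add_2_eq_Suc le_Suc_ex)
  have e: "rho = (\<lambda>t. t ^ Suc k * exp (- \<mu> * t))" unfolding rho_def fun_eq_iff by (simp add: k)
  have d: "(rho has_real_derivative (real (Suc k) * t ^ k) * exp (- \<mu> * t) + t ^ (Suc k) * (exp (- \<mu> * t) * (- \<mu>))) (at t)"
    unfolding e by (intro derivative_eq_intros) auto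
  have "(real (Suc k) * t ^ k) * exp (- \<mu> * t) + t ^ (Suc k) * (exp (- \<mu> * t) * (- \<mu>))
     = rho t * ((real N - 1) / t - \<mu>)"
    using assms unfolding e by (simp add: field_simps k)
  with d show ?thesis by simp
qed

lemma rho_le: assumes "0 \<le> t" "t \<le> s" shows "rho t \<le> exp (\<mu> * s) * rho s"
proof -
  have "t ^ (N - 1) \<le> s ^ (N - 1)" using assms by (simp add: power_mono)
  moreover have "exp (- \<mu> * t) \<le> 1" using assms mupos by simp
  moreover have "exp (\<mu> * s) * exp (- \<mu> * s) = 1" by (simp add: exp_minus_inverse)
  ultimately show ?thesis unfolding rho_def
    by (smt (verit, best) assms mult_left_le mult_nonneg_nonneg zero_le_power exp_ge_zero
        mult.assoc mult.commute mult_le_cancel_left1 order_trans)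
qed

lemma rho_ge: assumes "0 \<le> t" "t \<le> s" shows "t ^ (N - 1) * exp (- \<mu> * s) \<le> rho t"
  unfolding rho_def using assms mupos
  by (intro mult_left_mono) (auto simp: mult_left_mono)

lemma rho_integrable: "rho integrable_on {a..b}"
  by (rule integrable_continuous_interval) (rule rho_cont)

lemma int_rho_le: assumes "0 \<le> s" shows "integral {0..s} rho \<le> s * exp (\<mu> * s) * rho s"
proof -
  have "integral {0..s} rho \<le> integral {0..s} (\<lambda>t. exp (\<mu> * s) * rho s)"
    by (rule integral_le) (auto intro: rho_integrable rho_le)
  then show ?thesis using assms by (simp add: mult_ac)
qed

lemma int_pow: assumes "0 \<le> s" shows "((\<lambda>t. t ^ (N - 1)) has_integral s ^ N / N) {0..s}"
proof -
  have "((\<lambda>t. t ^ (N - 1)) has_integral (s ^ N / N - 0 ^ N / N)) {0..s}"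
  proof (rule fundamental_theorem_of_calculus[OF assms])
    fix x assume "x \<in> {0..s}"
    have "((\<lambda>t. t ^ N / N) has_real_derivative (real N * x ^ (N - Suc 0)) / N) (at x within {0..s})"
      using N2 by (intro derivative_eq_intros DERIV_pow) auto
    moreover have "(real N * x ^ (N - Suc 0)) / N = x ^ (N - 1)" using N2 by simp
    ultimately show "((\<lambda>t. t ^ N / N) has_vector_derivative x ^ (N - 1)) (at x within {0..s})"
      by (simp add: has_real_derivative_iff_has_vector_derivative)
  qed
  moreover have "(0::real) ^ N = 0" using N2 by simp
  ultimately show ?thesis by simp
qed

lemma int_rho_ge: assumes "0 \<le> s" shows "s ^ N / N * exp (- \<mu> * s) \<le> integral {0..s} rho"
proof -
  have "integral {0..s} (\<lambda>t. t ^ (N - 1) * exp (- \<mu> * s)) \<le> integral {0..s} rho"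
    apply (rule integral_le)
    apply (auto intro!: integrable_continuous_interval continuous_intros rho_integrable)[2]
    using rho_ge by simp
  moreover have "integral {0..s} (\<lambda>t. t ^ (N - 1) * exp (- \<mu> * s)) = s ^ N / N * exp (- \<mu> * s)"
    using int_pow[OF assms] by (simp add: integral_unique has_integral_mult_left)
  ultimately show ?thesis by simp
qed

end


context rad begin

lemma p_isCont: "t > 0 \<Longrightarrow> isCont p t"
  using pcont continuous_on_eq_continuous_at[of "{0<..}" p] by auto

lemma g_isCont: "t > 0 \<Longrightarrow> isCont g t"
  using gder DERIV_isCont by blast

lemma pR_cont: "r1 < R \<Longrightarrow> continuous_on {0..r1} (\<lambda>t. p (R - t))"
  by (intro continuous_at_imp_continuous_on ballI continuous_intros isCont_o2[OF _ p_isCont]) auto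

lemma pR_bound: "r1 < R \<Longrightarrow> t \<in> {0..r1} \<Longrightarrow> 0 < p (R - t) \<and> p (R - t) \<le> p (R - r1)"
  using pdecr[of "R - r1" "R - t"] ppos[of "R - t"] by auto

lemma ldiv:
  assumes r: "0 \<le> r" and hi: "(\<lambda>t. rho t * h t) integrable_on {0..r}"
    and hb: "\<And>t. t \<in> {0..r} \<Longrightarrow> \<bar>h t\<bar> \<le> C"
  shows ldiv_bound: "\<And>s. s \<in> {0..r} \<Longrightarrow> \<bar>integral {0..s} (\<lambda>t. rho t * h t) / rho s\<bar> \<le> C * s * exp (\<mu> * s)"
    and ldiv_cont: "continuous_on {0..r} (\<lambda>s. integral {0..s} (\<lambda>t. rho t * h t) / rho s)"
proof -
  show bnd: "\<bar>integral {0..s} (\<lambda>t. rho t * h t) / rho s\<bar> \<le> C * s * exp (\<mu> * s)" if s: "s \<in> {0..r}" for s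
  proof (cases "s = 0")
    case True then show ?thesis by simp
  next
    case False
    then have sp: "s > 0" using s by auto
    have hs: "(\<lambda>t. rho t * h t) integrable_on {0..s}"
      by (rule integrable_on_subinterval[OF hi]) (use s in auto)
    have i1: "(\<lambda>t. C * rho t) integrable_on {0..s}"
      by (intro integrable_continuous_interval continuous_intros rho_cont)
    have nb: "norm (rho t * h t) \<le> C * rho t" if t: "t \<in> {0..s}" for t
    proof -
      have "\<bar>h t\<bar> \<le> C" using hb t s by auto
      then have "rho t * \<bar>h t\<bar> \<le> rho t * C" using rho_nonneg[of t] t by (intro mult_left_mono) auto
      then show ?thesis using rho_nonneg[of t] t by (simp add: abs_mult mult.commute)
    qed
    have "\<bar>integral {0..s} (\<lambda>t. rho t * h t)\<bar> \<le> integral {0..s} (\<lambda>t. C * rho t)"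
      using integral_norm_bound_integral[OF hs i1 nb] by simp
    also have "\<dots> = C * integral {0..s} rho" by (simp add: integral_mult_right)
    also have "\<dots> \<le> C * (s * exp (\<mu> * s) * rho s)"
    proof -
      have "C \<ge> 0" using hb[of 0] r by (auto intro: order_trans[OF abs_ge_zero])
      then show ?thesis using int_rho_le[of s] sp by (auto intro: mult_left_mono)
    qed
    finally show ?thesis using rho_pos[OF sp] by (simp add: abs_div pos_divide_le_eq mult.assoc)
  qed
  show "continuous_on {0..r} (\<lambda>s. integral {0..s} (\<lambda>t. rho t * h t) / rho s)"
    unfolding continuous_on_eq_continuous_within
  proof
    fix s assume s: "s \<in> {0..r}"
    show "continuous (at s within {0..r}) (\<lambda>s. integral {0..s} (\<lambda>t. rho t * h t) / rho s)"
    proof (cases "s = 0")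
      case True
      have lim: "((\<lambda>x. C * x * exp (\<mu> * x)) \<longlongrightarrow> C * 0 * exp (\<mu> * 0)) (at 0 within {0..r})"
        by (intro tendsto_intros)
      have "((\<lambda>s. integral {0..s} (\<lambda>t. rho t * h t) / rho s) \<longlongrightarrow> 0) (at 0 within {0..r})"
        apply (rule Lim_null_comparison[OF _ lim[simplified]])
        unfolding eventually_at_filter using bnd by (auto intro!: always_eventually)
      then show ?thesis using True by (simp add: continuous_within)
    next
      case False
      then have "s > 0" using s by auto
      then have sp: "rho s \<noteq> 0" using rho_pos by force
      have c1: "continuous (at s within {0..r}) (\<lambda>x. integral {0..x} (\<lambda>t. rho t * h t))"
        using indefinite_integral_continuous_1[OF hi] s continuous_on_eq_continuous_within by blast
      have c2: "continuous (at s within {0..r}) rho"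
        using rho_isCont continuous_at_imp_continuous_within by blast
      show ?thesis using c1 c2 sp unfolding continuous_within by (intro tendsto_intros) auto
    qed
  qed
qed

definition Fn :: "(real \<Rightarrow> real) \<Rightarrow> (real \<Rightarrow> real) \<Rightarrow> real \<Rightarrow> real"
  where "Fn f v t = p (R - t) * f (v t) + 1"
definition Y :: "(real \<Rightarrow> real) \<Rightarrow> (real \<Rightarrow> real) \<Rightarrow> real \<Rightarrow> real"
  where "Y f v s = integral {0..s} (\<lambda>t. rho t * Fn f v t)"
definition q :: "(real \<Rightarrow> real) \<Rightarrow> (real \<Rightarrow> real) \<Rightarrow> real \<Rightarrow> real"
  where "q f v s = Y f v s / rho s"
definition T :: "(real \<Rightarrow> real) \<Rightarrow> real \<Rightarrow> (real \<Rightarrow> real) \<Rightarrow> real \<Rightarrow> real"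
  where "T f a v r = a - integral {0..r} (q f v)"
definition sol :: "(real \<Rightarrow> real) \<Rightarrow> real \<Rightarrow> (real \<Rightarrow> real) \<Rightarrow> bool"
  where "sol f a v \<longleftrightarrow> (\<forall>r1\<in>{0..<R}. continuous_on {0..r1} v) \<and> (\<forall>r\<in>{0..<R}. v r = T f a v r)"

definition adm :: "(real \<Rightarrow> real) \<Rightarrow> real \<Rightarrow> bool"
  where "adm f Cf \<longleftrightarrow> continuous_on UNIV f \<and> (\<forall>x y. x \<le> y \<longrightarrow> f y \<le> f x) \<and> (\<forall>x. 0 \<le> f x \<and> f x \<le> Cf)"

lemma Fn_bound:
  assumes "adm f Cf" "r1 < R" "t \<in> {0..r1}"
  shows "1 \<le> Fn f v t" "Fn f v t \<le> p (R - r1) * Cf + 1"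
proof -
  have a: "0 \<le> f (v t)" "f (v t) \<le> Cf" using assms(1) unfolding adm_def by auto
  have b: "0 < p (R - t)" "p (R - t) \<le> p (R - r1)" using pR_bound[OF assms(2,3)] by auto
  show "1 \<le> Fn f v t" unfolding Fn_def using a b by simp
  have "p (R - t) * f (v t) \<le> p (R - r1) * Cf" using a b by (intro mult_mono) auto
  then show "Fn f v t \<le> p (R - r1) * Cf + 1" unfolding Fn_def by simp
qed

lemma q_props:
  assumes f: "adm f Cf" and r1: "0 \<le> r1" "r1 < R"
    and hi: "(\<lambda>t. rho t * Fn f v t) integrable_on {0..r1}"
  shows q_cont: "continuous_on {0..r1} (q f v)"
    and q_bound: "\<And>s. s \<in> {0..r1} \<Longrightarrow> \<bar>q f v s\<bar> \<le> (p (R - r1) * Cf + 1) * s * exp (\<mu> * s)"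
    and q_nonneg: "\<And>s. s \<in> {0..r1} \<Longrightarrow> 0 \<le> q f v s"
proof -
  have hb: "\<bar>Fn f v t\<bar> \<le> p (R - r1) * Cf + 1" if t: "t \<in> {0..r1}" for t
  proof -
    have "1 \<le> Fn f v t" "Fn f v t \<le> p (R - r1) * Cf + 1" using Fn_bound[OF f r1(2) t] by auto
    then show ?thesis by simp
  qed
  show "continuous_on {0..r1} (q f v)"
    using ldiv_cont[OF r1(1) hi hb] unfolding q_def Y_def by simp
  show "\<bar>q f v s\<bar> \<le> (p (R - r1) * Cf + 1) * s * exp (\<mu> * s)" if "s \<in> {0..r1}" for s
    using ldiv_bound[OF r1(1) hi hb that] unfolding q_def Y_def by simp
  show "0 \<le> q f v s" if s: "s \<in> {0..r1}" for s
  proof -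
    have "(\<lambda>t. rho t * Fn f v t) integrable_on {0..s}"
      by (rule integrable_on_subinterval[OF hi]) (use s in auto)
    then have "0 \<le> Y f v s" unfolding Y_def
    proof (rule integral_nonneg)
      fix x assume x: "x \<in> {0..s}"
      then have "1 \<le> Fn f v x" using Fn_bound(1)[OF f r1(2), of x v] s by auto
      then show "0 \<le> rho x * Fn f v x" using rho_nonneg[of x] x by auto
    qed
    then show ?thesis unfolding q_def using rho_nonneg[of s] s by auto
  qed
qed

lemma T_cont:
  assumes f: "adm f Cf" and r1: "0 \<le> r1" "r1 < R"
    and hi: "(\<lambda>t. rho t * Fn f v t) integrable_on {0..r1}"
  shows "continuous_on {0..r1} (T f a v)"
proof -
  have "q f v integrable_on {0..r1}"
    using q_cont[OF assms] integrable_continuous_interval by blast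
  then show ?thesis unfolding T_def
    by (intro continuous_intros indefinite_integral_continuous_1)
qed

lemma T_deriv:
  assumes f: "adm f Cf" and r1: "0 \<le> r1" "r1 < R"
    and hi: "(\<lambda>t. rho t * Fn f v t) integrable_on {0..r1}" and r: "r \<in> {0..r1}"
  shows "(T f a v has_real_derivative - q f v r) (at r within {0..r1})"
proof -
  have "((\<lambda>z. integral {0..z} (q f v)) has_real_derivative q f v r) (at r within {0..r1})"
    by (rule integral_has_real_derivative[OF q_cont[OF assms(1-4)] r])
  then have "((\<lambda>z. a - integral {0..z} (q f v)) has_real_derivative 0 - q f v r) (at r within {0..r1})"
    by (intro DERIV_diff DERIV_const)
  then show ?thesis unfolding T_def by simp
qed

lemma sol_Fn_cont:
  assumes f: "adm f Cf" and s: "sol f a v" and r1: "0 \<le> r1" "r1 < R"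
  shows "continuous_on {0..r1} (\<lambda>t. rho t * Fn f v t)"
proof -
  have "continuous_on {0..r1} v" using s r1 unfolding sol_def by auto
  moreover have "continuous_on UNIV f" using f unfolding adm_def by auto
  ultimately have "continuous_on {0..r1} (\<lambda>t. f (v t))"
    using continuous_on_compose2 by blast
  then show ?thesis unfolding Fn_def
    by (intro continuous_intros pR_cont r1 rho_cont)
qed

lemma sol_hi:
  assumes f: "adm f Cf" and s: "sol f a v" and r1: "0 \<le> r1" "r1 < R"
  shows "(\<lambda>t. rho t * Fn f v t) integrable_on {0..r1}"
  using sol_Fn_cont[OF assms] integrable_continuous_interval by blast

end


context rad begin

lemma T_mono:
  assumes f1: "adm f1 C1" and f2: "adm f2 C2" and r: "0 \<le> r" "r < R"
    and i1: "(\<lambda>t. rho t * Fn f1 v1 t) integrable_on {0..r}"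
    and i2: "(\<lambda>t. rho t * Fn f2 v2 t) integrable_on {0..r}"
    and le: "\<And>t. t \<in> {0..r} \<Longrightarrow> Fn f1 v1 t \<le> Fn f2 v2 t"
  shows "T f2 a v2 r \<le> T f1 a v1 r"
proof -
  have "q f1 v1 s \<le> q f2 v2 s" if s: "s \<in> {0..r}" for s
  proof -
    have "Y f1 v1 s \<le> Y f2 v2 s" unfolding Y_def
    proof (rule integral_le)
      show "(\<lambda>t. rho t * Fn f1 v1 t) integrable_on {0..s}"
        by (rule integrable_on_subinterval[OF i1]) (use s in auto)
      show "(\<lambda>t. rho t * Fn f2 v2 t) integrable_on {0..s}"
        by (rule integrable_on_subinterval[OF i2]) (use s in auto)
      fix t assume "t \<in> {0..s}"
      then show "rho t * Fn f1 v1 t \<le> rho t * Fn f2 v2 t"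
        using le[of t] rho_nonneg[of t] s by (intro mult_left_mono) auto
    qed
    then show ?thesis unfolding q_def using rho_nonneg[of s] s by (intro divide_right_mono) auto
  qed
  then have "integral {0..r} (q f1 v1) \<le> integral {0..r} (q f2 v2)"
    using q_cont[OF f1 r i1] q_cont[OF f2 r i2]
    by (intro integral_le integrable_continuous_interval) auto
  then show ?thesis unfolding T_def by simp
qed

lemma T_le_a:
  assumes f: "adm f Cf" and r: "0 \<le> r" "r < R"
    and i: "(\<lambda>t. rho t * Fn f v t) integrable_on {0..r}"
  shows "T f a v r \<le> a"
proof -
  have "0 \<le> integral {0..r} (q f v)"
    using q_cont[OF f r i] q_nonneg[OF f r i]
    by (intro integral_nonneg integrable_continuous_interval) auto
  then show ?thesis unfolding T_def by simp
qed

lemma adm_const: "0 \<le> C \<Longrightarrow> adm (\<lambda>_. C) C"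
  unfolding adm_def by auto

lemma adm_Cf: "adm f Cf \<Longrightarrow> 0 \<le> Cf"
  unfolding adm_def by (auto intro: order_trans)

lemma cont_hi:
  assumes f: "adm f Cf" and r1: "0 \<le> r1" "r1 < R" and c: "continuous_on {0..r1} v"
  shows "(\<lambda>t. rho t * Fn f v t) integrable_on {0..r1}"
proof -
  have "continuous_on UNIV f" using f unfolding adm_def by auto
  then have "continuous_on {0..r1} (\<lambda>t. f (v t))"
    using continuous_on_compose2 c by blast
  then have "continuous_on {0..r1} (\<lambda>t. rho t * Fn f v t)" unfolding Fn_def
    by (intro continuous_intros pR_cont r1 rho_cont)
  then show ?thesis using integrable_continuous_interval by blast
qed

lemma exist_sol:
  assumes f: "adm f Cf"
  shows "\<exists>v. sol f a v"
proof -
  have Cf0: "0 \<le> Cf" using adm_Cf[OF f] .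
  have fc: "continuous_on UNIV f" and fanti: "\<And>x y. x \<le> y \<Longrightarrow> f y \<le> f x"
    using f unfolding adm_def by auto
  define v0 where "v0 = T (\<lambda>_. Cf) a (\<lambda>_. 0)"
  define vs where "vs k = (T f a ^^ k) v0" for k
  have vsS: "vs (Suc k) = T f a (vs k)" for k unfolding vs_def by simp
  have hi0: "(\<lambda>t. rho t * Fn (\<lambda>_. Cf) (\<lambda>_. 0) t) integrable_on {0..r1}" if "0 \<le> r1" "r1 < R" for r1
    by (rule cont_hi[OF adm_const[OF Cf0]]) (use that in auto)
  have cont: "continuous_on {0..r1} (vs k)" if r1: "0 \<le> r1" "r1 < R" for k r1
  proof (induction k)
    case 0
    show ?case unfolding vs_def using T_cont[OF adm_const[OF Cf0] r1 hi0[OF r1]] by (simp add: v0_def)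
  next
    case (Suc k)
    show ?case unfolding vsS using T_cont[OF f r1 cont_hi[OF f r1 Suc]] .
  qed
  have hik: "(\<lambda>t. rho t * Fn f (vs k) t) integrable_on {0..r1}" if r1: "0 \<le> r1" "r1 < R" for k r1
    using cont_hi[OF f r1 cont[OF r1]] .
  have incr: "vs k r \<le> vs (Suc k) r" if r: "0 \<le> r" "r < R" for k r
    using r
  proof (induction k arbitrary: r)
    case 0
    have "T (\<lambda>_. Cf) a (\<lambda>_. 0) r \<le> T f a v0 r"
    proof (rule T_mono[OF f adm_const[OF Cf0] 0(1,2)])
      show "(\<lambda>t. rho t * Fn f v0 t) integrable_on {0..r}"
        using hik[of r 0] 0 by (simp add: vs_def)
      show "(\<lambda>t. rho t * Fn (\<lambda>_. Cf) (\<lambda>_. 0) t) integrable_on {0..r}" using hi0 0 by auto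
      fix t assume t: "t \<in> {0..r}"
      have "f (v0 t) \<le> Cf" using f unfolding adm_def by auto
      then show "Fn f v0 t \<le> Fn (\<lambda>_. Cf) (\<lambda>_. 0) t"
        unfolding Fn_def using pR_bound[of r t] t 0 by (auto intro!: mult_left_mono)
    qed
    then show ?case by (simp add: vs_def v0_def)
  next
    case (Suc k)
    have "T f a (vs k) r \<le> T f a (vs (Suc k)) r"
    proof (rule T_mono[OF f f Suc(2,3) hik[OF Suc(2,3)] hik[OF Suc(2,3)]])
      fix t assume t: "t \<in> {0..r}"
      have "f (vs (Suc k) t) \<le> f (vs k t)" using Suc.IH[of t] t Suc(3) fanti by auto
      then show "Fn f (vs (Suc k)) t \<le> Fn f (vs k) t"
        unfolding Fn_def using pR_bound[of r t] t Suc by (auto intro!: mult_left_mono)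
    qed
    then show ?case by (simp add: vsS)
  qed
  have ubd: "vs (Suc k) r \<le> a" if r: "0 \<le> r" "r < R" for k r
    unfolding vsS using T_le_a[OF f r hik[OF r]] .
  define v where "v r = (SUP k. vs k r)" for r
  have conv: "(\<lambda>k. vs k r) \<longlonglongrightarrow> v r" if r: "0 \<le> r" "r < R" for r
  proof -
    have inc: "incseq (\<lambda>k. vs k r)" using incr[OF r] by (simp add: incseq_SucI)
    have "bdd_above (range (\<lambda>k. vs k r))"
    proof (rule bdd_aboveI)
      fix x assume "x \<in> range (\<lambda>k. vs k r)"
      then obtain k where "x = vs k r" by auto
      then show "x \<le> vs 0 r + a - vs 0 r + \<bar>vs 0 r\<bar> + \<bar>a\<bar>"
        using ubd[OF r, of "k - 1"] incr[OF r, of 0] by (cases k) auto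
    qed
    then show ?thesis unfolding v_def using LIMSEQ_incseq_SUP inc by blast
  qed
  have Fconv: "(\<lambda>k. rho t * Fn f (vs k) t) \<longlonglongrightarrow> rho t * Fn f v t" if t: "0 \<le> t" "t < R" for t
    unfolding Fn_def
    by (intro tendsto_intros continuous_on_tendsto_compose[OF fc conv[OF t]]) auto
  have main: "(\<lambda>t. rho t * Fn f v t) integrable_on {0..r} \<and> (\<lambda>k. T f a (vs k) r) \<longlonglongrightarrow> T f a v r"
    if r: "0 \<le> r" "r < R" for r
  proof -
    let ?B = "p (R - r) * Cf + 1"
    have Yconv: "(\<lambda>t. rho t * Fn f v t) integrable_on {0..s} \<and> (\<lambda>k. Y f (vs k) s) \<longlonglongrightarrow> Y f v s"
      if s: "s \<in> {0..r}" for s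
    proof -
      have fi: "(\<lambda>t. rho t * Fn f (vs k) t) integrable_on {0..s}" for k
        by (rule integrable_on_subinterval[OF hik[OF r]]) (use s in auto)
      have hb: "(\<lambda>t. rho t * ?B) integrable_on {0..s}"
        by (intro integrable_continuous_interval continuous_intros rho_cont)
      have le: "norm (rho t * Fn f (vs k) t) \<le> rho t * ?B" if t: "t \<in> {0..s}" for k t
      proof -
        have "1 \<le> Fn f (vs k) t" "Fn f (vs k) t \<le> ?B" using Fn_bound[OF f r(2), of t] t s by auto
        then show ?thesis using rho_nonneg[of t] t by (simp add: abs_mult mult_left_mono)
      qed
      have cv: "(\<lambda>k. rho t * Fn f (vs k) t) \<longlonglongrightarrow> rho t * Fn f v t" if t: "t \<in> {0..s}" for t
        using Fconv[of t] t s r by auto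
      note d = dominated_convergence[OF fi hb le cv]
      then show ?thesis unfolding Y_def by auto
    qed
    have qconv: "(\<lambda>k. q f (vs k) s) \<longlonglongrightarrow> q f v s" if s: "s \<in> {0..r}" for s
    proof (cases "rho s = 0")
      case True then show ?thesis unfolding q_def by simp
    next
      case False
      have "(\<lambda>k. Y f (vs k) s) \<longlonglongrightarrow> Y f v s" using Yconv[OF s] by simp
      from tendsto_divide[OF this tendsto_const False] show ?thesis unfolding q_def .
    qed
    have hiv: "(\<lambda>t. rho t * Fn f v t) integrable_on {0..r}" using Yconv[of r] r by auto
    have "(\<lambda>k. integral {0..r} (q f (vs k))) \<longlonglongrightarrow> integral {0..r} (q f v)"
    proof (rule dominated_convergence(2))
      show "q f (vs k) integrable_on {0..r}" for k
        using q_cont[OF f r hik[OF r]] integrable_continuous_interval by blast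
      show "(\<lambda>s. ?B * s * exp (\<mu> * s)) integrable_on {0..r}"
        by (intro integrable_continuous_interval continuous_intros)
      show "norm (q f (vs k) s) \<le> ?B * s * exp (\<mu> * s)" if "s \<in> {0..r}" for k s
        using q_bound[OF f r hik[OF r] that] by simp
      show "(\<lambda>k. q f (vs k) s) \<longlonglongrightarrow> q f v s" if "s \<in> {0..r}" for s
        using qconv[OF that] .
    qed
    then have "(\<lambda>k. T f a (vs k) r) \<longlonglongrightarrow> T f a v r" unfolding T_def by (intro tendsto_intros)
    with hiv show ?thesis by auto
  qed
  have eq: "v r = T f a v r" if r: "0 \<le> r" "r < R" for r
  proof -
    have l1: "(\<lambda>k. vs (Suc k) r) \<longlonglongrightarrow> T f a v r" unfolding vsS using main[OF r] by auto
    have l2: "(\<lambda>k. vs (Suc k) r) \<longlonglongrightarrow> v r" using LIMSEQ_Suc[OF conv[OF r]] .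
    show ?thesis using LIMSEQ_unique[OF l2 l1] .
  qed
  have "continuous_on {0..r1} v" if r1: "0 \<le> r1" "r1 < R" for r1
  proof -
    have "continuous_on {0..r1} (T f a v)" using T_cont[OF f r1] main[OF r1] by auto
    moreover have "\<And>x. x \<in> {0..r1} \<Longrightarrow> T f a v x = v x" using eq r1 by auto
    ultimately show ?thesis by (rule continuous_on_eq)
  qed
  then have "sol f a v" unfolding sol_def using eq by auto
  then show ?thesis by blast
qed

end


context rad begin

lemma N_pos[simp]: "0 < N" using N2 by simp

lemma sol_cont: "sol f a v \<Longrightarrow> 0 \<le> r1 \<Longrightarrow> r1 < R \<Longrightarrow> continuous_on {0..r1} v"
  unfolding sol_def by auto

lemma sol_eq: "sol f a v \<Longrightarrow> 0 \<le> r \<Longrightarrow> r < R \<Longrightarrow> v r = a - integral {0..r} (q f v)"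
  unfolding sol_def T_def by auto

lemma sol_0: "sol f a v \<Longrightarrow> v 0 = a"
  using sol_eq[of f a v 0] Rpos by simp

lemma sol_q_cont: "adm f Cf \<Longrightarrow> sol f a v \<Longrightarrow> 0 \<le> r1 \<Longrightarrow> r1 < R \<Longrightarrow> continuous_on {0..r1} (q f v)"
  using q_cont sol_hi by blast

lemma sol_q_nonneg: "adm f Cf \<Longrightarrow> sol f a v \<Longrightarrow> 0 \<le> s \<Longrightarrow> s < R \<Longrightarrow> 0 \<le> q f v s"
  using q_nonneg[of f Cf s v s] sol_hi[of f Cf a v s] by auto

lemma sol_deriv:
  assumes f: "adm f Cf" and s: "sol f a v" and x: "0 < x" "x < R"
  shows "(v has_real_derivative - q f v x) (at x)"
proof -
  define r1 where "r1 = (x + R) / 2"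
  have r1: "0 \<le> r1" "r1 < R" "x < r1" using x by (auto simp: r1_def)
  have "(T f a v has_real_derivative - q f v x) (at x within {0..r1})"
    using T_deriv[OF f r1(1,2) sol_hi[OF f s r1(1,2)]] x r1 by auto
  then have d: "(T f a v has_real_derivative - q f v x) (at x)"
    using at_within_Icc_at[of 0 x r1] x r1 by simp
  show ?thesis
    by (rule has_field_derivative_transform_within_open[OF d, of "{0<..<R}"])
       (use x s in \<open>auto simp: sol_def\<close>)
qed

lemma sol_drop:
  assumes f: "adm f Cf" and s: "sol f a v" and t: "0 \<le> t" "t \<le> r" and r: "r < R"
  shows "v r \<le> v t - (r^2 - t^2) / (2 * N)"
proof -
  have r0: "0 \<le> r" using t by simp
  have qc: "continuous_on {0..r} (q f v)" using sol_q_cont[OF f s r0 r] .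
  have "x / N \<le> q f v x" if x': "x \<in> {t..r}" for x
  proof (cases "x = 0")
    case True then show ?thesis using sol_q_nonneg[OF f s, of 0] Rpos by simp
  next
    case False
    then have sp: "x > 0" using x' t by auto
    have hi: "(\<lambda>t. rho t * Fn f v t) integrable_on {0..x}"
      using sol_hi[OF f s, of x] x' r t by auto
    have c1: "integral {0..x} rho \<le> Y f v x" unfolding Y_def
    proof (rule integral_le[OF rho_integrable hi])
      fix y assume y: "y \<in> {0..x}"
      then have "1 \<le> Fn f v y" using Fn_bound(1)[OF f, of x y v] x' r by auto
      then show "rho y \<le> rho y * Fn f v y" using rho_nonneg[of y] y by (simp add: mult_le_cancel_left1)
    qed
    have c2: "x ^ N / N * exp (- \<mu> * x) \<le> integral {0..x} rho" using int_rho_ge[of x] sp by simp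
    have c3: "x ^ N / N * exp (- \<mu> * x) = (x / N) * rho x"
    proof -
      obtain k where k: "N = Suc k" using N2 by (metis Suc_diff_1 not_numeral_le_zero order_less_le_trans pos2 zero_less_iff_neq_zero le_eq_less_or_eq)
      then show ?thesis unfolding rho_def by simp
    qed
    from c1 c2 c3 have "(x / N) * rho x \<le> Y f v x" by linarith
    then show ?thesis unfolding q_def using rho_pos[OF sp] by (simp add: pos_le_divide_eq)
  qed
  then have "integral {t..r} (\<lambda>s. s / N) \<le> integral {t..r} (q f v)"
    using qc t N2
    by (intro integral_le integrable_continuous_interval continuous_intros) (auto intro: continuous_on_subset)
  moreover have "integral {t..r} (\<lambda>s. s / N) = (r^2 - t^2) / (2 * N)"
  proof -
    have "((\<lambda>s. s / N) has_integral (r^2 / (2 * N) - t^2 / (2 * N))) {t..r}"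
    proof (rule fundamental_theorem_of_calculus[OF t(2)])
      fix x assume "x \<in> {t..r}"
      have "((\<lambda>s. s^2 / (2 * N)) has_real_derivative (2 * x) / (2 * N)) (at x within {t..r})"
        by (intro derivative_eq_intros) auto
      then show "((\<lambda>s. s^2 / (2 * N)) has_vector_derivative x / N) (at x within {t..r})"
        by (simp add: has_real_derivative_iff_has_vector_derivative)
    qed
    from integral_unique[OF this] show ?thesis by (simp add: diff_divide_distrib)
  qed
  moreover have "integral {0..t} (q f v) + integral {t..r} (q f v) = integral {0..r} (q f v)"
    by (rule Henstock_Kurzweil_Integration.integral_combine[OF t integrable_continuous_interval[OF qc]])
  moreover have "v r = a - integral {0..r} (q f v)" using sol_eq[OF s r0 r] .
  moreover have "v t = a - integral {0..t} (q f v)" using sol_eq[OF s t(1)] t r by simp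
  ultimately show ?thesis by simp
qed

end


lemma integral_cmult_real: "integral S (\<lambda>x. c * f x) = c * integral S (f :: 'a::euclidean_space \<Rightarrow> real)"
  using integral_cmul[of S c f] by simp

context rad begin

lemma sol_fv_cont:
  assumes f: "adm f Cf" and s: "sol f a v" and r1: "0 \<le> r1" "r1 < R"
  shows "continuous_on {0..r1} (\<lambda>t. f (v t))"
proof -
  have "continuous_on UNIV f" using f unfolding adm_def by auto
  then show ?thesis using continuous_on_compose2 sol_cont[OF s r1] by blast
qed

lemma qdiff:
  assumes f1: "adm f1 C1" and f2: "adm f2 C2" and s1: "sol f1 a v" and s2: "sol f2 b w"
    and x: "0 \<le> x" "x < R"
  shows "q f1 v x - q f2 w x = integral {0..x} (\<lambda>t. rho t * p (R - t) * (f1 (v t) - f2 (w t))) / rho x"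
proof -
  have i1: "(\<lambda>t. rho t * Fn f1 v t) integrable_on {0..x}" using sol_hi[OF f1 s1 x] .
  have i2: "(\<lambda>t. rho t * Fn f2 w t) integrable_on {0..x}" using sol_hi[OF f2 s2 x] .
  have "Y f1 v x - Y f2 w x = integral {0..x} (\<lambda>t. rho t * Fn f1 v t - rho t * Fn f2 w t)"
    unfolding Y_def using Henstock_Kurzweil_Integration.integral_diff[OF i1 i2] by simp
  also have "\<dots> = integral {0..x} (\<lambda>t. rho t * p (R - t) * (f1 (v t) - f2 (w t)))"
    unfolding Fn_def by (simp add: algebra_simps)
  finally show ?thesis unfolding q_def by (metis diff_divide_distrib)
qed

lemma qdiff_int:
  assumes f1: "adm f1 C1" and f2: "adm f2 C2" and s1: "sol f1 a v" and s2: "sol f2 b w"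
    and x: "0 \<le> x" "x < R"
  shows "(\<lambda>t. rho t * p (R - t) * (f1 (v t) - f2 (w t))) integrable_on {0..x}"
  by (intro integrable_continuous_interval continuous_intros rho_cont pR_cont sol_fv_cont[OF f1 s1 x]
      sol_fv_cont[OF f2 s2 x] x)

lemma qdiff_nonneg:
  assumes f1: "adm f1 C1" and f2: "adm f2 C2" and s1: "sol f1 a v" and s2: "sol f2 b w"
    and x: "0 \<le> x" "x < R"
    and h: "\<And>t. t \<in> {0..x} \<Longrightarrow> f2 (w t) \<le> f1 (v t)"
  shows "0 \<le> q f1 v x - q f2 w x"
proof -
  have "0 \<le> integral {0..x} (\<lambda>t. rho t * p (R - t) * (f1 (v t) - f2 (w t)))"
  proof (rule integral_nonneg[OF qdiff_int[OF assms(1-6)]])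
    fix t assume t: "t \<in> {0..x}"
    have "0 \<le> rho t * p (R - t)" using rho_nonneg[of t] pR_bound[of x t] t x by auto
    moreover have "0 \<le> f1 (v t) - f2 (w t)" using h[OF t] by simp
    ultimately show "0 \<le> rho t * p (R - t) * (f1 (v t) - f2 (w t))" by simp
  qed
  then show ?thesis unfolding qdiff[OF assms(1-6)] using rho_nonneg[of x] x by simp
qed

lemma sol_diff_eq:
  assumes f1: "adm f1 C1" and f2: "adm f2 C2" and s1: "sol f1 a v" and s2: "sol f2 b w"
    and r: "0 \<le> r" "r < R"
  shows "w r - v r = (b - a) + integral {0..r} (\<lambda>s. q f1 v s - q f2 w s)"
proof -
  have c1: "q f1 v integrable_on {0..r}" using sol_q_cont[OF f1 s1 r] integrable_continuous_interval by blast
  have c2: "q f2 w integrable_on {0..r}" using sol_q_cont[OF f2 s2 r] integrable_continuous_interval by blast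
  show ?thesis using sol_eq[OF s1 r] sol_eq[OF s2 r] Henstock_Kurzweil_Integration.integral_diff[OF c1 c2]
    by simp
qed

lemma cmp0:
  assumes f1: "adm f1 C1" and f2: "adm f2 C2" and s1: "sol f1 a v" and s2: "sol f2 b w"
    and ab: "a < b" and H: "\<And>x y. x \<le> y \<Longrightarrow> f2 y \<le> f1 x"
    and r: "0 \<le> r" "r < R"
  shows "b - a \<le> w r - v r"
proof -
  have K: "b - a \<le> w x - v x" if x: "0 \<le> x" "x < R" and le: "\<And>t. t \<in> {0..x} \<Longrightarrow> v t \<le> w t" for x
  proof -
    have "0 \<le> integral {0..x} (\<lambda>s. q f1 v s - q f2 w s)"
    proof (rule integral_nonneg)
      show "(\<lambda>s. q f1 v s - q f2 w s) integrable_on {0..x}"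
        by (intro integrable_continuous_interval continuous_intros sol_q_cont[OF f1 s1 x] sol_q_cont[OF f2 s2 x])
      fix s assume s: "s \<in> {0..x}"
      show "0 \<le> q f1 v s - q f2 w s"
        by (rule qdiff_nonneg[OF f1 f2 s1 s2]) (use s x le H in auto)
    qed
    then show ?thesis using sol_diff_eq[OF f1 f2 s1 s2 x] by simp
  qed
  have pos: "\<forall>t\<in>{0..r}. 0 < w t - v t"
  proof (rule ccontr)
    assume neg: "\<not> (\<forall>t\<in>{0..r}. 0 < w t - v t)"
    define S where "S = {t \<in> {0..r}. w t - v t \<le> 0}"
    have Sne: "S \<noteq> {}" using neg unfolding S_def by auto
    have Sbd: "bdd_below S" unfolding S_def by (rule bdd_belowI[of _ 0]) auto
    have dc: "continuous_on {0..r} (\<lambda>t. w t - v t)"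
      by (intro continuous_intros sol_cont[OF s1 r] sol_cont[OF s2 r])
    have Scl: "closed S" unfolding S_def
      by (rule continuous_on_closed_Collect_le[OF dc continuous_on_const closed_atLeastAtMost])
    define t0 where "t0 = Inf S"
    have t0S: "t0 \<in> S" unfolding t0_def using closed_contains_Inf[OF Sne Sbd Scl] .
    then have t0: "0 \<le> t0" "t0 \<le> r" "w t0 - v t0 \<le> 0" unfolding S_def by auto
    have below: "0 < w t - v t" if "0 \<le> t" "t < t0" for t
    proof (rule ccontr)
      assume "\<not> 0 < w t - v t"
      then have "t \<in> S" unfolding S_def using that t0 by auto
      then have "t0 \<le> t" unfolding t0_def by (rule cInf_lower[OF _ Sbd])
      then show False using that by simp
    qed
    have "t0 \<noteq> 0" using t0 ab sol_0[OF s1] sol_0[OF s2] by auto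
    then have t0p: "0 < t0" using t0 by simp
    have ge: "b - a \<le> w t - v t" if "t \<in> {0..<t0}" for t
      by (rule K) (use that t0 r below in \<open>auto intro: less_imp_le\<close>)
    have "b - a \<le> w t0 - v t0"
    proof (rule continuous_ge_on_closure[of "{0..<t0}" "\<lambda>t. w t - v t"])
      show "continuous_on (closure {0..<t0}) (\<lambda>t. w t - v t)"
        using t0p t0 by (auto intro: continuous_on_subset[OF dc])
      show "t0 \<in> closure {0..<t0}" using t0p by simp
    qed (use ge in auto)
    then show False using t0 ab by simp
  qed
  show ?thesis by (rule K[OF r]) (use pos in \<open>auto simp: less_imp_le\<close>)
qed

definition mm :: "real \<Rightarrow> real" where
  "mm s = integral {0..s} (\<lambda>t. rho t * p (R - t)) / rho s"
definition MM :: "real \<Rightarrow> real" where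
  "MM r = integral {0..r} mm"

lemma mm_cont: assumes r: "0 \<le> r" "r < R" shows "continuous_on {0..r} mm"
proof -
  have i: "(\<lambda>t. rho t * p (R - t)) integrable_on {0..r}"
    by (intro integrable_continuous_interval continuous_intros rho_cont pR_cont r)
  have b: "\<And>t. t \<in> {0..r} \<Longrightarrow> \<bar>p (R - t)\<bar> \<le> p (R - r)" using pR_bound[OF r(2)] by fastforce
  show ?thesis unfolding mm_def using ldiv_cont[OF r(1) i b] .
qed

lemma mm_nonneg: assumes s: "0 \<le> s" "s < R" shows "0 \<le> mm s"
proof -
  have "0 \<le> integral {0..s} (\<lambda>t. rho t * p (R - t))"
  proof (rule integral_nonneg)
    show "(\<lambda>t. rho t * p (R - t)) integrable_on {0..s}"
      by (intro integrable_continuous_interval continuous_intros rho_cont pR_cont s)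
    fix t assume t: "t \<in> {0..s}"
    have "0 \<le> rho t" using rho_nonneg[of t] t by auto
    moreover have "0 \<le> p (R - t)" using pR_bound[OF s(2) t] by auto
    ultimately show "0 \<le> rho t * p (R - t)" by simp
  qed
  then show ?thesis unfolding mm_def using rho_nonneg[of s] s by simp
qed

lemma MM_deriv: assumes x: "0 < x" "x < R" shows "(MM has_real_derivative mm x) (at x)"
proof -
  define r1 where "r1 = (x + R) / 2"
  have r1: "0 \<le> r1" "r1 < R" "x < r1" using x by (auto simp: r1_def)
  have "(MM has_real_derivative mm x) (at x within {0..r1})"
    unfolding MM_def by (rule integral_has_real_derivative[OF mm_cont[OF r1(1,2)]]) (use x r1 in auto)
  then show ?thesis using at_within_Icc_at[of 0 x r1] x r1 by simp
qed

lemma MM_cont: assumes r: "0 \<le> r" "r < R" shows "continuous_on {0..r} MM"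
  unfolding MM_def by (rule indefinite_integral_continuous_1, rule integrable_continuous_interval, rule mm_cont[OF r])

lemma MM_nonneg: assumes r: "0 \<le> r" "r < R" shows "0 \<le> MM r"
  unfolding MM_def
  by (rule integral_nonneg[OF integrable_continuous_interval[OF mm_cont[OF r]]]) (use r mm_nonneg in auto)

lemma gron:
  assumes f1: "adm f1 C1" and f2: "adm f2 C2" and s1: "sol f1 a v" and s2: "sol f2 b w"
    and r: "0 \<le> r" "r < R" and K0: "0 \<le> K"
    and vw: "\<And>t. t \<in> {0..r} \<Longrightarrow> v t \<le> w t"
    and fb: "\<And>t. t \<in> {0..r} \<Longrightarrow> 0 \<le> f1 (v t) - f2 (w t) \<and> f1 (v t) - f2 (w t) \<le> K * (w t - v t)"
  shows "w r - v r \<le> (b - a) * exp (K * MM r)"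
proof -
  define d where "d t = w t - v t" for t
  define dq where "dq t = q f1 v t - q f2 w t" for t
  have dc: "continuous_on {0..r} d" unfolding d_def
    by (intro continuous_intros sol_cont[OF s1 r] sol_cont[OF s2 r])
  have dd: "(d has_real_derivative dq x) (at x)" if x: "0 < x" "x < R" for x
  proof -
    have "(d has_real_derivative (- q f2 w x) - (- q f1 v x)) (at x)"
      unfolding d_def by (intro DERIV_diff sol_deriv[OF f1 s1 x] sol_deriv[OF f2 s2 x])
    then show ?thesis unfolding dq_def by simp
  qed
  have dqn: "0 \<le> dq x" if x: "x \<in> {0..r}" for x
    unfolding dq_def by (rule qdiff_nonneg[OF f1 f2 s1 s2]) (use x r fb in auto)
  have dmono: "d t \<le> d s" if ts: "0 \<le> t" "t \<le> s" "s \<le> r" for s t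
  proof (rule DERIV_nonneg_imp_increasing_open[OF ts(2)])
    fix x assume "t < x" "x < s"
    then show "\<exists>y. (d has_real_derivative y) (at x) \<and> 0 \<le> y"
      using dd[of x] dqn[of x] ts r by (intro exI[of _ "dq x"]) auto
  next
    show "continuous_on {t..s} d" using dc ts by (auto intro: continuous_on_subset)
  qed
  have dqb: "dq x \<le> K * d x * mm x" if x: "x \<in> {0..r}" for x
  proof -
    have x': "0 \<le> x" "x < R" using x r by auto
    have "integral {0..x} (\<lambda>t. rho t * p (R - t) * (f1 (v t) - f2 (w t)))
        \<le> integral {0..x} (\<lambda>t. rho t * p (R - t) * (K * d x))"
    proof (rule integral_le[OF qdiff_int[OF f1 f2 s1 s2 x']])
      show "(\<lambda>t. rho t * p (R - t) * (K * d x)) integrable_on {0..x}"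
        by (intro integrable_continuous_interval continuous_intros rho_cont pR_cont x')
      fix t assume t: "t \<in> {0..x}"
      have "f1 (v t) - f2 (w t) \<le> K * (w t - v t)" using fb[of t] t x by auto
      also have "\<dots> \<le> K * d x" using dmono[of t x] t x K0 unfolding d_def by (auto intro: mult_left_mono)
      finally have "f1 (v t) - f2 (w t) \<le> K * d x" .
      moreover have "0 \<le> rho t * p (R - t)" using rho_nonneg[of t] pR_bound[of x t] t x' by auto
      ultimately show "rho t * p (R - t) * (f1 (v t) - f2 (w t)) \<le> rho t * p (R - t) * (K * d x)"
        by (intro mult_left_mono) auto
    qed
    also have "\<dots> = K * d x * integral {0..x} (\<lambda>t. rho t * p (R - t))"
      using integral_cmult_real[of "{0..x}" "K * d x" "\<lambda>t. rho t * p (R - t)"] by (simp add: mult.commute)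
    finally have "integral {0..x} (\<lambda>t. rho t * p (R - t) * (f1 (v t) - f2 (w t))) / rho x
        \<le> K * d x * integral {0..x} (\<lambda>t. rho t * p (R - t)) / rho x"
      using rho_nonneg[of x] x by (intro divide_right_mono) auto
    then show ?thesis unfolding dq_def qdiff[OF f1 f2 s1 s2 x'] mm_def by simp
  qed
  define D where "D t = d t * exp (- K * MM t)" for t
  have "D r \<le> D 0"
  proof (rule DERIV_nonpos_imp_decreasing_open[OF r(1)])
    fix x assume x: "0 < x" "x < r"
    have x': "0 < x" "x < R" using x r by auto
    have e1: "((\<lambda>t. - K * MM t) has_real_derivative - K * mm x) (at x)"
      using DERIV_cmult[OF MM_deriv[OF x'], of "- K"] by simp
    have e2: "((\<lambda>t. exp (- K * MM t)) has_real_derivative exp (- K * MM x) * (- K * mm x)) (at x)"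
      using DERIV_fun_exp[OF e1] by simp
    have "(D has_real_derivative dq x * exp (- K * MM x) + exp (- K * MM x) * (- K * mm x) * d x) (at x)"
      unfolding D_def using DERIV_mult[OF dd[OF x'] e2] by simp
    moreover have "dq x * exp (- K * MM x) + exp (- K * MM x) * (- K * mm x) * d x
        = (dq x - K * d x * mm x) * exp (- K * MM x)" by (simp add: algebra_simps)
    moreover have "(dq x - K * d x * mm x) * exp (- K * MM x) \<le> 0"
      using dqb[of x] x by (intro mult_nonpos_nonneg) auto
    ultimately show "\<exists>y. (D has_real_derivative y) (at x) \<and> y \<le> 0" by auto
  next
    show "continuous_on {0..r} D" unfolding D_def
      by (intro continuous_intros dc MM_cont[OF r])
  qed
  moreover have "D 0 = b - a" unfolding D_def d_def MM_def using sol_0[OF s1] sol_0[OF s2] by simp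
  ultimately have "d r * exp (- K * MM r) \<le> b - a" unfolding D_def by simp
  then have "d r \<le> (b - a) * exp (K * MM r)"
    by (simp add: exp_minus divide_le_eq field_simps)
  then show ?thesis unfolding d_def .
qed

end


context rad begin

definition Ptot :: real where
  "Ptot = integral {0..max 1 R} (\<lambda>t. t * p t)"

lemma tp_int: "(\<lambda>t. t * p t) integrable_on {0..max 1 R}"
proof (rule Henstock_Kurzweil_Integration.integrable_combine[of 0 1 "max 1 R"])
  show "(\<lambda>t. t * p t) integrable_on {0..1}" using pint .
  have "continuous_on {1..max 1 R} p" using pcont by (rule continuous_on_subset) auto
  then show "(\<lambda>t. t * p t) integrable_on {1..max 1 R}"
    by (intro integrable_continuous_interval continuous_intros)
qed auto

lemma tp_nonneg: "0 \<le> t \<Longrightarrow> 0 \<le> t * p t"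
  using ppos[of t] by (cases "t = 0") auto

lemma refl_int:
  assumes r: "0 \<le> r" "r < R"
  shows "integral {0..r} (\<lambda>t. (R - t) * p (R - t)) \<le> Ptot"
proof -
  have c: "continuous_on {R - r..R} p" by (rule continuous_on_subset[OF pcont]) (use r in auto)
  have hi: "(\<lambda>t. t * p t) integrable_on {R - r..R}"
    using c by (intro integrable_continuous_interval continuous_intros)
  have "((\<lambda>x. (\<lambda>t. t * p t) ((-1) *\<^sub>R x + R)) has_integral (1 / (\<bar>-1\<bar> ^ DIM(real))) *\<^sub>R integral {R - r..R} (\<lambda>t. t * p t))
      ((\<lambda>x. (1 / (-1)) *\<^sub>R x + -((1 / (-1)) *\<^sub>R R)) ` cbox (R - r) R)"
    by (rule has_integral_affinity) (use integrable_integral[OF hi] in auto)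
  moreover have "(\<lambda>x. (1 / (-1)) *\<^sub>R x + -((1 / (-1)) *\<^sub>R R)) ` cbox (R - r) R = {0..r}"
  proof -
    have "(\<lambda>x. (1 / (-1)) *\<^sub>R x + -((1 / (-1)) *\<^sub>R R)) = (\<lambda>x::real. R - x)" by (auto simp: fun_eq_iff)
    moreover have "(\<lambda>x::real. R - x) ` {R - r..R} = {0..r}"
    proof
      show "(\<lambda>x::real. R - x) ` {R - r..R} \<subseteq> {0..r}" by auto
      show "{0..r} \<subseteq> (\<lambda>x::real. R - x) ` {R - r..R}"
      proof
        fix y assume "y \<in> {0..r}"
        then show "y \<in> (\<lambda>x::real. R - x) ` {R - r..R}" by (intro image_eqI[of _ _ "R - y"]) auto
      qed
    qed
    ultimately show ?thesis by simp
  qed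
  ultimately have "((\<lambda>t. (R - t) * p (R - t)) has_integral integral {R - r..R} (\<lambda>t. t * p t)) {0..r}"
    by simp
  then have "integral {0..r} (\<lambda>t. (R - t) * p (R - t)) = integral {R - r..R} (\<lambda>t. t * p t)"
    by (rule integral_unique)
  also have "\<dots> \<le> Ptot" unfolding Ptot_def
    by (rule integral_subset_le[OF _ hi tp_int]) (use r tp_nonneg in auto)
  finally show ?thesis .
qed

lemma Ptot_nonneg: "0 \<le> Ptot"
  unfolding Ptot_def by (rule integral_nonneg[OF tp_int]) (use tp_nonneg in auto)

lemma MM_bound:
  assumes r: "0 \<le> r" "r < R"
  shows "MM r \<le> exp (\<mu> * R) * Ptot"
proof -
  define Q where "Q s = integral {0..s} (\<lambda>t. p (R - t))" for s
  have pc: "continuous_on {0..r} (\<lambda>t. p (R - t))" using pR_cont[OF r(2)] .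
  have Qc: "continuous_on {0..r} Q" unfolding Q_def
    by (rule indefinite_integral_continuous_1[OF integrable_continuous_interval[OF pc]])
  have mmQ: "mm s \<le> exp (\<mu> * R) * Q s" if s: "s \<in> {0..r}" for s
  proof (cases "s = 0")
    case True then show ?thesis by (simp add: mm_def Q_def)
  next
    case False
    then have sp: "0 < s" using s by auto
    have "integral {0..s} (\<lambda>t. rho t * p (R - t)) \<le> integral {0..s} (\<lambda>t. (exp (\<mu> * R) * rho s) * p (R - t))"
    proof (rule integral_le)
      show "(\<lambda>t. rho t * p (R - t)) integrable_on {0..s}"
        using s r by (intro integrable_continuous_interval continuous_intros rho_cont pR_cont) auto
      show "(\<lambda>t. (exp (\<mu> * R) * rho s) * p (R - t)) integrable_on {0..s}"
        using s r by (intro integrable_continuous_interval continuous_intros rho_cont pR_cont) auto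
      fix t assume t: "t \<in> {0..s}"
      have "rho t \<le> exp (\<mu> * s) * rho s" using rho_le[of t s] t by auto
      also have "\<dots> \<le> exp (\<mu> * R) * rho s"
        using s r mupos rho_nonneg[of s] by (intro mult_right_mono) auto
      finally have "rho t \<le> exp (\<mu> * R) * rho s" .
      moreover have "0 \<le> p (R - t)" using pR_bound[of s t] t s r by auto
      ultimately show "rho t * p (R - t) \<le> (exp (\<mu> * R) * rho s) * p (R - t)"
        by (intro mult_right_mono) auto
    qed
    also have "\<dots> = (exp (\<mu> * R) * rho s) * Q s" unfolding Q_def by (rule integral_cmult_real)
    finally show ?thesis unfolding mm_def using rho_pos[OF sp] by (simp add: divide_le_eq mult_ac)
  qed
  have "MM r \<le> integral {0..r} (\<lambda>s. exp (\<mu> * R) * Q s)" unfolding MM_def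
    by (rule integral_le) (use mm_cont[OF r] Qc mmQ in \<open>auto intro!: integrable_continuous_interval continuous_intros\<close>)
  also have "\<dots> = exp (\<mu> * R) * integral {0..r} Q" by (rule integral_cmult_real)
  also have "integral {0..r} Q = integral {0..r} (\<lambda>t. (r - t) * p (R - t))"
  proof -
    define H where "H s = s * Q s - integral {0..s} (\<lambda>t. t * p (R - t))" for s
    have tpc: "continuous_on {0..r} (\<lambda>t. t * p (R - t))" by (intro continuous_intros pc)
    have "(Q has_integral (H r - H 0)) {0..r}"
    proof (rule fundamental_theorem_of_calculus[OF r(1)])
      fix x assume x: "x \<in> {0..r}"
      have d1: "(Q has_real_derivative p (R - x)) (at x within {0..r})"
        unfolding Q_def by (rule integral_has_real_derivative[OF pc x])
      have d2: "((\<lambda>s. integral {0..s} (\<lambda>t. t * p (R - t))) has_real_derivative x * p (R - x)) (at x within {0..r})"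
        by (rule integral_has_real_derivative[OF tpc x])
      have d3: "((\<lambda>s. s * Q s) has_real_derivative 1 * Q x + p (R - x) * x) (at x within {0..r})"
        using DERIV_mult[OF DERIV_ident d1] by simp
      have "(H has_real_derivative (1 * Q x + p (R - x) * x) - x * p (R - x)) (at x within {0..r})"
        unfolding H_def by (rule DERIV_diff[OF d3 d2])
      then show "(H has_vector_derivative Q x) (at x within {0..r})"
        by (simp add: has_real_derivative_iff_has_vector_derivative)
    qed
    then have "integral {0..r} Q = H r" by (simp add: integral_unique H_def Q_def)
    also have "\<dots> = integral {0..r} (\<lambda>t. r * p (R - t)) - integral {0..r} (\<lambda>t. t * p (R - t))"
      unfolding H_def Q_def by (simp add: integral_cmult_real)
    also have "\<dots> = integral {0..r} (\<lambda>t. r * p (R - t) - t * p (R - t))"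
      by (rule Henstock_Kurzweil_Integration.integral_diff[symmetric])
         (auto intro!: integrable_continuous_interval continuous_intros pc)
    finally show ?thesis by (simp add: left_diff_distrib)
  qed
  also have "integral {0..r} (\<lambda>t. (r - t) * p (R - t)) \<le> integral {0..r} (\<lambda>t. (R - t) * p (R - t))"
  proof (rule integral_le)
    show "(\<lambda>t. (r - t) * p (R - t)) integrable_on {0..r}"
      by (intro integrable_continuous_interval continuous_intros pc)
    show "(\<lambda>t. (R - t) * p (R - t)) integrable_on {0..r}"
      by (intro integrable_continuous_interval continuous_intros pc)
    fix t assume t: "t \<in> {0..r}"
    then show "(r - t) * p (R - t) \<le> (R - t) * p (R - t)"
      using pR_bound[OF r(2) t] r by (intro mult_right_mono) auto
  qed
  also have "\<dots> \<le> Ptot" by (rule refl_int[OF r])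
  finally show ?thesis by simp
qed

end


lemma near_le:
  fixes x y a C :: real
  assumes C: "0 \<le> C" and h: "\<And>b. a < b \<Longrightarrow> b \<le> a + 1 \<Longrightarrow> x \<le> y + (b - a) * C"
  shows "x \<le> y"
proof (rule field_le_epsilon)
  fix e :: real assume e: "0 < e"
  define b where "b = a + min 1 (e / (C + 1))"
  have b: "a < b" "b \<le> a + 1" using e C by (auto simp: b_def)
  have "min 1 (e / (C + 1)) \<le> e / (C + 1)" by simp
  then have "min 1 (e / (C + 1)) * C \<le> (e / (C + 1)) * C" using C by (rule mult_right_mono)
  then have "(b - a) * C \<le> (e / (C + 1)) * C" unfolding b_def by simp
  also have "\<dots> \<le> e" using C e by (simp add: field_simps)
  finally show "x \<le> y + e" using h[OF b] by simp
qed

context rad begin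

definition fe :: "real \<Rightarrow> real \<Rightarrow> real" where "fe \<epsilon> x = g (max x \<epsilon>)"

lemma adm_fe: assumes e: "0 < \<epsilon>" shows "adm (fe \<epsilon>) (g \<epsilon>)"
  unfolding adm_def
proof (intro conjI allI impI)
  show "continuous_on UNIV (fe \<epsilon>)" unfolding fe_def
    by (intro continuous_at_imp_continuous_on ballI isCont_o2[OF _ g_isCont] continuous_intros)
       (use e in auto)
  fix x y :: real assume "x \<le> y"
  then show "fe \<epsilon> y \<le> fe \<epsilon> x" unfolding fe_def using e by (intro gdecr) auto
next
  fix x have "0 < max x \<epsilon>" using e by simp
  then show "0 \<le> fe \<epsilon> x" unfolding fe_def using gpos[of "max x \<epsilon>"] by (simp add: less_imp_le)
  show "fe \<epsilon> x \<le> g \<epsilon>" unfolding fe_def using gdecr[of \<epsilon> "max x \<epsilon>"] e by auto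
qed

lemma lipg:
  assumes l: "0 < l"
  shows "\<exists>K\<ge>0. \<forall>x y. l \<le> x \<longrightarrow> x \<le> y \<longrightarrow> y \<le> B \<longrightarrow> g x - g y \<le> K * (y - x)"
proof -
  have "continuous_on {l..max l B} g'" using g'cont by (rule continuous_on_subset) (use l in auto)
  then have "compact (g' ` {l..max l B})" by (intro compact_continuous_image) auto
  then obtain K where K: "K > 0" "\<And>z. z \<in> g' ` {l..max l B} \<Longrightarrow> norm z \<le> K"
    using compact_imp_bounded bounded_pos by metis
  show ?thesis
  proof (intro exI[of _ K] conjI allI impI)
    show "0 \<le> K" using K by simp
    fix x y assume xy: "l \<le> x" "x \<le> y" "y \<le> B"
    show "g x - g y \<le> K * (y - x)"
    proof (cases "x = y")
      case True then show ?thesis by simp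
    next
      case False
      then have "x < y" using xy by simp
      from MVT2[OF this, of g g'] obtain z where z: "x < z" "z < y" "g y - g x = (y - x) * g' z"
        using gder xy l by force
      have "\<bar>g' z\<bar> \<le> K" using K(2)[of "g' z"] z xy by auto
      then have "(y - x) * (- g' z) \<le> (y - x) * K" using z by (intro mult_left_mono) auto
      then show ?thesis using z by (simp add: algebra_simps)
    qed
  qed
qed

lemma fe_lip:
  assumes e: "0 < l" "l \<le> \<epsilon>"
  shows "\<exists>K\<ge>0. \<forall>x y. x \<le> y \<longrightarrow> y \<le> B \<longrightarrow> 0 \<le> fe \<epsilon> x - fe \<epsilon> y \<and> fe \<epsilon> x - fe \<epsilon> y \<le> K * (y - x)"
proof -
  obtain K where K: "K \<ge> 0" "\<And>x y. l \<le> x \<Longrightarrow> x \<le> y \<Longrightarrow> y \<le> max B \<epsilon> \<Longrightarrow> g x - g y \<le> K * (y - x)"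
    using lipg[OF e(1), of "max B \<epsilon>"] by blast
  show ?thesis
  proof (intro exI[of _ K] conjI allI impI)
    fix x y assume xy: "x \<le> y" "y \<le> B"
    have "g (max x \<epsilon>) - g (max y \<epsilon>) \<le> K * (max y \<epsilon> - max x \<epsilon>)"
      using K(2)[of "max x \<epsilon>" "max y \<epsilon>"] xy e by auto
    also have "\<dots> \<le> K * (y - x)" using K(1) xy by (intro mult_left_mono) auto
    finally show "fe \<epsilon> x - fe \<epsilon> y \<le> K * (y - x)" unfolding fe_def .
    show "0 \<le> fe \<epsilon> x - fe \<epsilon> y" using adm_fe[of \<epsilon>] xy e unfolding adm_def by auto
  qed (use K in auto)
qed

definition vsol :: "real \<Rightarrow> real \<Rightarrow> real \<Rightarrow> real" where
  "vsol \<epsilon> a = (SOME v. sol (fe \<epsilon>) a v)"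

lemma vsol: "0 < \<epsilon> \<Longrightarrow> sol (fe \<epsilon>) a (vsol \<epsilon> a)"
  unfolding vsol_def using exist_sol[OF adm_fe] by (rule someI_ex)

lemma sol_le_a: "adm f Cf \<Longrightarrow> sol f a v \<Longrightarrow> 0 \<le> r \<Longrightarrow> r < R \<Longrightarrow> v r \<le> a"
  using T_le_a[of f Cf r v a] sol_hi[of f Cf a v r] unfolding sol_def by auto

lemma sol_mono: "adm f Cf \<Longrightarrow> sol f a v \<Longrightarrow> 0 \<le> t \<Longrightarrow> t \<le> r \<Longrightarrow> r < R \<Longrightarrow> v r \<le> v t"
  using sol_drop[of f Cf a v t r] by (smt (verit) divide_nonneg_nonneg mult_left_mono power_mono
      of_nat_0_le_iff zero_le_mult_iff)

lemma vsol_le: "0 < \<epsilon> \<Longrightarrow> 0 \<le> r \<Longrightarrow> r < R \<Longrightarrow> vsol \<epsilon> a r \<le> a"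
  using sol_le_a[OF adm_fe vsol] .

lemma vsol_0: "0 < \<epsilon> \<Longrightarrow> vsol \<epsilon> a 0 = a"
  using sol_0[OF vsol] .

lemma fe_H: "0 < \<epsilon>' \<Longrightarrow> \<epsilon>' \<le> \<epsilon> \<Longrightarrow> x \<le> y \<Longrightarrow> fe \<epsilon> y \<le> fe \<epsilon>' x"
  unfolding fe_def by (intro gdecr) auto

lemma vsol_cmp:
  assumes e: "0 < \<epsilon>'" "\<epsilon>' \<le> \<epsilon>" and ab: "a < b" and r: "0 \<le> r" "r < R"
  shows "b - a \<le> vsol \<epsilon> b r - vsol \<epsilon>' a r"
  by (rule cmp0[OF adm_fe adm_fe vsol vsol ab fe_H r]) (use e in auto)

lemma vsol_gron:
  assumes e: "0 < \<epsilon>" and ab: "a \<le> b" and r: "0 \<le> r" "r < R" and K: "0 \<le> K"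
    and vw: "\<And>t. t \<in> {0..r} \<Longrightarrow> vsol \<epsilon> a t \<le> vsol \<epsilon> b t"
    and L: "\<And>x y. x \<le> y \<Longrightarrow> y \<le> b \<Longrightarrow> 0 \<le> fe \<epsilon> x - fe \<epsilon> y \<and> fe \<epsilon> x - fe \<epsilon> y \<le> K * (y - x)"
  shows "vsol \<epsilon> b r - vsol \<epsilon> a r \<le> (b - a) * exp (K * MM r)"
proof (rule gron[OF adm_fe[OF e] adm_fe[OF e] vsol[OF e] vsol[OF e] r K vw])
  fix t assume t: "t \<in> {0..r}"
  show "0 \<le> fe \<epsilon> (vsol \<epsilon> a t) - fe \<epsilon> (vsol \<epsilon> b t) \<and> fe \<epsilon> (vsol \<epsilon> a t) - fe \<epsilon> (vsol \<epsilon> b t) \<le> K * (vsol \<epsilon> b t - vsol \<epsilon> a t)"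
    using L[OF vw[OF t] vsol_le[OF e]] t r by auto
qed (use vw in auto)

lemma vsol_eps_mono:
  assumes e: "0 < \<epsilon>'" "\<epsilon>' \<le> \<epsilon>" and r: "0 \<le> r" "r < R"
  shows "vsol \<epsilon>' a r \<le> vsol \<epsilon> a r"
proof -
  have e0: "0 < \<epsilon>" using e by simp
  obtain K where K: "K \<ge> 0" "\<And>x y. x \<le> y \<Longrightarrow> y \<le> a + 1 \<Longrightarrow> 0 \<le> fe \<epsilon> x - fe \<epsilon> y \<and> fe \<epsilon> x - fe \<epsilon> y \<le> K * (y - x)"
    using fe_lip[OF e0 order_refl, of "a + 1"] by blast
  define C where "C = exp (K * exp (\<mu> * R) * Ptot) - 1"
  have C0: "0 \<le> C" unfolding C_def using K(1) Ptot_nonneg by simp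
  show ?thesis
  proof (rule near_le[OF C0])
    fix b assume b: "a < b" "b \<le> a + 1"
    have c1: "b - a \<le> vsol \<epsilon> b r - vsol \<epsilon>' a r" by (rule vsol_cmp[OF e b(1) r])
    have vw: "vsol \<epsilon> a t \<le> vsol \<epsilon> b t" if "t \<in> {0..r}" for t
      using vsol_cmp[OF e0 order_refl b(1), of t] that r b(1) by auto
    have c2: "vsol \<epsilon> b r - vsol \<epsilon> a r \<le> (b - a) * exp (K * MM r)"
      by (rule vsol_gron[OF e0 less_imp_le[OF b(1)] r K(1) vw]) (use K(2) b in auto)
    have "exp (K * MM r) \<le> exp (K * exp (\<mu> * R) * Ptot)"
      using MM_bound[OF r] K(1) by (simp add: mult_left_mono mult.assoc)
    then have "(b - a) * exp (K * MM r) \<le> (b - a) * (C + 1)" unfolding C_def using b by (intro mult_left_mono) auto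
    with c1 c2 show "vsol \<epsilon>' a r \<le> vsol \<epsilon> a r + (b - a) * C" by (simp add: algebra_simps)
  qed
qed

lemma vsol_local:
  assumes e1: "0 < \<epsilon>1" and e2: "0 < \<epsilon>2" and r: "0 \<le> r" "r < R"
    and big: "\<And>t. t \<in> {0..r} \<Longrightarrow> max \<epsilon>1 \<epsilon>2 \<le> vsol \<epsilon>1 a t"
  shows "vsol \<epsilon>2 a r = vsol \<epsilon>1 a r"
proof (cases "\<epsilon>2 \<le> \<epsilon>1")
  case True
  obtain K where K: "K \<ge> 0" "\<And>x y. x \<le> y \<Longrightarrow> y \<le> a \<Longrightarrow> 0 \<le> fe \<epsilon>2 x - fe \<epsilon>2 y \<and> fe \<epsilon>2 x - fe \<epsilon>2 y \<le> K * (y - x)"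
    using fe_lip[OF e2 order_refl, of a] by blast
  have vw: "vsol \<epsilon>2 a t \<le> vsol \<epsilon>1 a t" if "t \<in> {0..r}" for t
    using vsol_eps_mono[OF e2 True, of t] that r by auto
  have "vsol \<epsilon>1 a r - vsol \<epsilon>2 a r \<le> (a - a) * exp (K * MM r)"
  proof (rule gron[OF adm_fe[OF e2] adm_fe[OF e1] vsol[OF e2] vsol[OF e1] r K(1) vw])
    fix t assume t: "t \<in> {0..r}"
    have eq: "fe \<epsilon>1 (vsol \<epsilon>1 a t) = fe \<epsilon>2 (vsol \<epsilon>1 a t)" unfolding fe_def using big[OF t] by simp
    show "0 \<le> fe \<epsilon>2 (vsol \<epsilon>2 a t) - fe \<epsilon>1 (vsol \<epsilon>1 a t) \<and>
        fe \<epsilon>2 (vsol \<epsilon>2 a t) - fe \<epsilon>1 (vsol \<epsilon>1 a t) \<le> K * (vsol \<epsilon>1 a t - vsol \<epsilon>2 a t)"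
      unfolding eq using K(2)[OF vw[OF t] vsol_le[OF e1]] t r by auto
  qed (use vw in auto)
  then show ?thesis using vw[of r] r by simp
next
  case False
  obtain K where K: "K \<ge> 0" "\<And>x y. x \<le> y \<Longrightarrow> y \<le> a \<Longrightarrow> 0 \<le> fe \<epsilon>2 x - fe \<epsilon>2 y \<and> fe \<epsilon>2 x - fe \<epsilon>2 y \<le> K * (y - x)"
    using fe_lip[OF e2 order_refl, of a] by blast
  have vw: "vsol \<epsilon>1 a t \<le> vsol \<epsilon>2 a t" if "t \<in> {0..r}" for t
    using vsol_eps_mono[OF e1, of \<epsilon>2 t] False that r by auto
  have "vsol \<epsilon>2 a r - vsol \<epsilon>1 a r \<le> (a - a) * exp (K * MM r)"
  proof (rule gron[OF adm_fe[OF e1] adm_fe[OF e2] vsol[OF e1] vsol[OF e2] r K(1) vw])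
    fix t assume t: "t \<in> {0..r}"
    have eq: "fe \<epsilon>1 (vsol \<epsilon>1 a t) = fe \<epsilon>2 (vsol \<epsilon>1 a t)" unfolding fe_def using big[OF t] by simp
    show "0 \<le> fe \<epsilon>1 (vsol \<epsilon>1 a t) - fe \<epsilon>2 (vsol \<epsilon>2 a t) \<and>
        fe \<epsilon>1 (vsol \<epsilon>1 a t) - fe \<epsilon>2 (vsol \<epsilon>2 a t) \<le> K * (vsol \<epsilon>2 a t - vsol \<epsilon>1 a t)"
      unfolding eq using K(2)[OF vw[OF t] vsol_le[OF e2]] t r by auto
  qed (use vw in auto)
  then show ?thesis using vw[of r] r by simp
qed

end


context rad begin

definition Pos :: "real \<Rightarrow> real \<Rightarrow> bool" where
  "Pos a r \<longleftrightarrow> (\<exists>\<epsilon>>0. \<forall>t\<in>{0..r}. \<epsilon> \<le> vsol \<epsilon> a t)"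
definition PP :: "real \<Rightarrow> bool" where
  "PP a \<longleftrightarrow> (\<forall>r\<in>{0..<R}. Pos a r)"

lemma Pos_mono: "Pos a r \<Longrightarrow> r' \<le> r \<Longrightarrow> Pos a r'"
  unfolding Pos_def by (meson atLeastAtMost_iff order_trans)

lemma Pos_0: "0 < a \<Longrightarrow> Pos a 0"
  unfolding Pos_def using vsol_0 by (intro exI[of _ a]) auto

lemma q_le:
  assumes f: "adm f Cf" and s: "sol f a v" and x: "0 \<le> x" "x < R"
  shows "q f v x \<le> Cf * mm x + x * exp (\<mu> * x)"
proof (cases "x = 0")
  case True then show ?thesis by (simp add: q_def mm_def)
next
  case False
  then have xp: "0 < x" using x by simp
  have "Y f v x \<le> integral {0..x} (\<lambda>t. Cf * (rho t * p (R - t)) + rho t)" unfolding Y_def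
  proof (rule integral_le[OF sol_hi[OF f s x]])
    show "(\<lambda>t. Cf * (rho t * p (R - t)) + rho t) integrable_on {0..x}"
      by (intro integrable_continuous_interval continuous_intros rho_cont pR_cont x)
    fix t assume t: "t \<in> {0..x}"
    have "f (v t) \<le> Cf" using f unfolding adm_def by auto
    moreover have "0 \<le> rho t * p (R - t)" using rho_nonneg[of t] pR_bound[OF x(2) t] t by auto
    ultimately have "rho t * p (R - t) * f (v t) \<le> rho t * p (R - t) * Cf" by (intro mult_left_mono)
    then show "rho t * Fn f v t \<le> Cf * (rho t * p (R - t)) + rho t" unfolding Fn_def
      by (simp add: algebra_simps)
  qed
  also have "\<dots> = Cf * integral {0..x} (\<lambda>t. rho t * p (R - t)) + integral {0..x} rho"
  proof -
    have i1: "(\<lambda>t. Cf * (rho t * p (R - t))) integrable_on {0..x}"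
      by (intro integrable_continuous_interval continuous_intros rho_cont pR_cont x)
    show ?thesis using Henstock_Kurzweil_Integration.integral_add[OF i1 rho_integrable] integral_cmult_real by simp
  qed
  also have "\<dots> \<le> Cf * integral {0..x} (\<lambda>t. rho t * p (R - t)) + x * exp (\<mu> * x) * rho x"
    using int_rho_le[OF x(1)] by simp
  finally have "Y f v x \<le> Cf * integral {0..x} (\<lambda>t. rho t * p (R - t)) + x * exp (\<mu> * x) * rho x" .
  then have "Y f v x / rho x \<le> (Cf * integral {0..x} (\<lambda>t. rho t * p (R - t)) + x * exp (\<mu> * x) * rho x) / rho x"
    using rho_pos[OF xp] by (intro divide_right_mono) auto
  then show ?thesis unfolding q_def mm_def using rho_pos[OF xp] by (simp add: add_divide_distrib)
qed

lemma small_not_PP: "\<not> PP (R^2 / (16 * N))"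
proof
  assume "PP (R^2 / (16 * N))"
  then have "Pos (R^2 / (16 * N)) (R / 2)" unfolding PP_def using Rpos by auto
  then obtain \<epsilon> where e: "0 < \<epsilon>" "\<epsilon> \<le> vsol \<epsilon> (R^2 / (16 * N)) (R / 2)"
    unfolding Pos_def using Rpos by fastforce
  have "vsol \<epsilon> (R^2 / (16 * N)) (R / 2) \<le> vsol \<epsilon> (R^2 / (16 * N)) 0 - ((R/2)^2 - 0^2) / (2 * N)"
    by (rule sol_drop[OF adm_fe[OF e(1)] vsol[OF e(1)]]) (use Rpos in auto)
  also have "\<dots> = R^2 / (16 * N) - R^2 / (8 * N)" using vsol_0[OF e(1)] by (simp add: power_divide)
  also have "\<dots> < 0" using Rpos by (simp add: field_simps)
  finally show False using e by simp
qed

definition abig :: real where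
  "abig = max 2 (2 * (g 1 * (exp (\<mu> * R) * Ptot) + R^2 * exp (\<mu> * R)) + 1)"

lemma big_PP: assumes a: "abig \<le> a" shows "PP a"
  unfolding PP_def Pos_def
proof (intro ballI exI[of _ "a / 2"] conjI)
  have a2: "2 \<le> a" using a unfolding abig_def by simp
  let ?C0 = "g 1 * (exp (\<mu> * R) * Ptot) + R^2 * exp (\<mu> * R)"
  have aC: "2 * ?C0 + 1 \<le> a" using a unfolding abig_def by simp
  show "0 < a / 2" using a2 by simp
  fix r t assume r: "r \<in> {0..<R}" and t: "t \<in> {0..r}"
  have e: "0 < a / 2" using a2 by simp
  let ?v = "vsol (a / 2) a"
  have t': "0 \<le> t" "t < R" using r t by auto
  have s: "sol (fe (a/2)) a ?v" using vsol[OF e] .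
  have ga: "g (a / 2) \<le> g 1" using gdecr[of 1 "a/2"] a2 by simp
  have "integral {0..t} (q (fe (a/2)) ?v) \<le> integral {0..t} (\<lambda>s. g 1 * mm s + R * exp (\<mu> * R))"
  proof (rule integral_le)
    show "q (fe (a/2)) ?v integrable_on {0..t}"
      using sol_q_cont[OF adm_fe[OF e] s t'] integrable_continuous_interval by blast
    show "(\<lambda>s. g 1 * mm s + R * exp (\<mu> * R)) integrable_on {0..t}"
      using mm_cont[OF t'] by (intro integrable_continuous_interval continuous_intros) auto
    fix s assume s': "s \<in> {0..t}"
    have "q (fe (a/2)) ?v s \<le> g (a/2) * mm s + s * exp (\<mu> * s)"
      by (rule q_le[OF adm_fe[OF e] s]) (use s' t' in auto)
    also have "g (a/2) * mm s \<le> g 1 * mm s"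
      using ga mm_nonneg[of s] s' t' by (intro mult_right_mono) auto
    also have "s * exp (\<mu> * s) \<le> R * exp (\<mu> * R)"
      using s' t' mupos by (intro mult_mono) auto
    finally show "q (fe (a/2)) ?v s \<le> g 1 * mm s + R * exp (\<mu> * R)" by simp
  qed
  also have "\<dots> = g 1 * MM t + t * (R * exp (\<mu> * R))"
    unfolding MM_def using mm_cont[OF t'] t'
    by (subst Henstock_Kurzweil_Integration.integral_add)
       (auto intro!: integrable_continuous_interval continuous_intros simp: integral_cmult_real)
  also have "\<dots> \<le> g 1 * (exp (\<mu> * R) * Ptot) + R * (R * exp (\<mu> * R))"
  proof (intro add_mono mult_left_mono mult_right_mono)
    show "MM t \<le> exp (\<mu> * R) * Ptot" using MM_bound[OF t'] .
    show "0 \<le> g 1" using gpos[of 1] by simp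
  qed (use t' in auto)
  finally have "integral {0..t} (q (fe (a/2)) ?v) \<le> ?C0" by (simp add: power2_eq_square)
  then show "a / 2 \<le> ?v t" using sol_eq[OF s t'] aC by simp
qed

lemma PP_up: assumes "PP a" "a < b" shows "PP b"
  unfolding PP_def
proof
  fix r assume r: "r \<in> {0..<R}"
  then obtain \<epsilon> where e: "0 < \<epsilon>" "\<And>t. t \<in> {0..r} \<Longrightarrow> \<epsilon> \<le> vsol \<epsilon> a t"
    using assms(1) unfolding PP_def Pos_def by blast
  show "Pos b r" unfolding Pos_def
  proof (intro exI[of _ \<epsilon>] conjI ballI)
    fix t assume t: "t \<in> {0..r}"
    have "b - a \<le> vsol \<epsilon> b t - vsol \<epsilon> a t"
      by (rule vsol_cmp[OF e(1) order_refl assms(2)]) (use t r in auto)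
    then show "\<epsilon> \<le> vsol \<epsilon> b t" using e(2)[OF t] assms(2) by simp
  qed (use e in auto)
qed

end


context rad begin

lemma vsol_cont: "0 < \<epsilon> \<Longrightarrow> 0 \<le> r \<Longrightarrow> r < R \<Longrightarrow> continuous_on {0..r} (vsol \<epsilon> a)"
  using sol_cont[OF vsol] .

lemma PP_open:
  assumes a: "0 < a" and nP: "\<not> PP a"
  shows "\<exists>\<eta>>0. \<not> PP (a + \<eta>)"
proof -
  obtain r1 where r1: "0 \<le> r1" "r1 < R" "\<not> Pos a r1" using nP unfolding PP_def by auto
  define r2 where "r2 = (r1 + R) / 2"
  have r2: "r1 < r2" "r2 < R" using r1 by (auto simp: r2_def)
  define S where "S = {r \<in> {0..r1}. Pos a r}"
  have S0: "0 \<in> S" unfolding S_def using Pos_0[OF a] r1 by auto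
  have Sne: "S \<noteq> {}" using S0 by auto
  have Sbd: "bdd_above S" unfolding S_def by (rule bdd_aboveI[of _ r1]) auto
  define r0 where "r0 = Sup S"
  have r0: "0 \<le> r0" "r0 \<le> r1" unfolding r0_def
    using cSup_upper[OF S0 Sbd] cSup_least[OF Sne, of r1] by (auto simp: S_def)
  have belowPos: "Pos a r" if rr: "r < r0" for r
  proof -
    obtain s where "s \<in> S" "r < s" using less_cSupD[OF Sne, of r] rr unfolding r0_def by blast
    then show ?thesis unfolding S_def using Pos_mono[of a s r] by auto
  qed
  have C: "\<exists>r \<epsilon>. 0 \<le> r \<and> r \<le> r1 \<and> 0 < \<epsilon> \<and> (\<forall>t\<in>{0..r}. \<epsilon> \<le> vsol \<epsilon> a t) \<and> vsol \<epsilon> a r < \<kappa>"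
    if k: "0 < \<kappa>" "\<kappa> \<le> a" for \<kappa>
  proof (rule ccontr)
    assume no: "\<not> ?thesis"
    have H: "\<kappa> \<le> vsol \<epsilon> a r" if "0 \<le> r" "r \<le> r1" "0 < \<epsilon>" "\<forall>t\<in>{0..r}. \<epsilon> \<le> vsol \<epsilon> a t" for r \<epsilon>
      using no that by force
    define \<epsilon>0 where "\<epsilon>0 = \<kappa> / 2"
    have e0: "0 < \<epsilon>0" "\<epsilon>0 < \<kappa>" using k by (auto simp: \<epsilon>0_def)
    have below: "\<kappa> \<le> vsol \<epsilon>0 a t" if t: "0 \<le> t" "t < r0" for t
    proof -
      obtain \<epsilon> where e: "0 < \<epsilon>" "\<And>s. s \<in> {0..t} \<Longrightarrow> \<epsilon> \<le> vsol \<epsilon> a s"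
        using belowPos[OF t(2)] unfolding Pos_def by blast
      have Hs: "\<kappa> \<le> vsol \<epsilon> a s" if "s \<in> {0..t}" for s
        by (rule H) (use that t r0 e in auto)
      have "vsol \<epsilon>0 a t = vsol \<epsilon> a t"
      proof (rule vsol_local[OF e(1) e0(1)])
        fix s assume "s \<in> {0..t}"
        then show "max \<epsilon> \<epsilon>0 \<le> vsol \<epsilon> a s" using e(2) Hs e0 by fastforce
      qed (use t r0 r1 in auto)
      then show ?thesis using Hs[of t] t by simp
    qed
    have c0: "continuous_on {0..r1} (vsol \<epsilon>0 a)" using vsol_cont[OF e0(1) r1(1,2)] .
    have at0: "\<kappa> \<le> vsol \<epsilon>0 a r0"
    proof (cases "r0 = 0")
      case True then show ?thesis using vsol_0[OF e0(1)] k by simp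
    next
      case False
      then have "0 < r0" using r0 by simp
      show ?thesis
      proof (rule continuous_ge_on_closure[of "{0..<r0}" "vsol \<epsilon>0 a"])
        show "continuous_on (closure {0..<r0}) (vsol \<epsilon>0 a)"
          using \<open>0 < r0\<close> r0 by (auto intro: continuous_on_subset[OF c0])
        show "r0 \<in> closure {0..<r0}" using \<open>0 < r0\<close> by simp
      qed (use below in auto)
    qed
    have all: "\<kappa> \<le> vsol \<epsilon>0 a t" if "t \<in> {0..r0}" for t
      using below at0 that by (cases "t = r0") auto
    show False
    proof (cases "r0 = r1")
      case True
      have "Pos a r1" unfolding Pos_def
        by (intro exI[of _ \<epsilon>0]) (use e0 all True in \<open>auto intro: less_imp_le order_trans\<close>)
      then show False using r1 by simp
    next
      case False
      then have lt: "r0 < r1" using r0 by simp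
      obtain \<delta> where d: "\<delta> > 0" "\<And>t. t \<in> {0..r1} \<Longrightarrow> dist t r0 < \<delta> \<Longrightarrow> dist (vsol \<epsilon>0 a t) (vsol \<epsilon>0 a r0) < \<kappa> / 2"
        using c0 r0 k unfolding continuous_on_iff by (metis atLeastAtMost_iff half_gt_zero)
      define r' where "r' = min (r0 + \<delta> / 2) r1"
      have r': "r0 < r'" "r' \<le> r1" using lt d by (auto simp: r'_def)
      have "Pos a r'" unfolding Pos_def
      proof (intro exI[of _ \<epsilon>0] conjI ballI)
        fix t assume t: "t \<in> {0..r'}"
        show "\<epsilon>0 \<le> vsol \<epsilon>0 a t"
        proof (cases "t \<le> r0")
          case True then show ?thesis using all[of t] t e0 by auto
        next
          case False
          then have "dist t r0 < \<delta>" using t d(1) by (auto simp: r'_def dist_real_def)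
          then have "dist (vsol \<epsilon>0 a t) (vsol \<epsilon>0 a r0) < \<kappa> / 2" using d(2)[of t] t r' by auto
          then have "\<bar>vsol \<epsilon>0 a t - vsol \<epsilon>0 a r0\<bar> < \<kappa> / 2" by (simp add: dist_real_def)
          then show ?thesis using at0 unfolding \<epsilon>0_def by linarith
        qed
      qed (use e0 in auto)
      then have "r' \<in> S" unfolding S_def using r' r0 by auto
      then have "r' \<le> r0" unfolding r0_def by (rule cSup_upper[OF _ Sbd])
      then show False using r' by simp
    qed
  qed
  define c0 where "c0 = (r2^2 - r1^2) / (2 * N)"
  have c0p: "0 < c0" unfolding c0_def using r1 r2 by (auto intro!: divide_pos_pos power_strict_mono)
  define \<kappa> where "\<kappa> = min a (c0 / 4)"
  have k: "0 < \<kappa>" "\<kappa> \<le> a" "\<kappa> \<le> c0 / 4" using a c0p by (auto simp: \<kappa>_def)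
  obtain r \<epsilon> where re: "0 \<le> r" "r \<le> r1" "0 < \<epsilon>" "\<And>t. t \<in> {0..r} \<Longrightarrow> \<epsilon> \<le> vsol \<epsilon> a t" "vsol \<epsilon> a r < \<kappa>"
    using C[OF k(1,2)] by blast
  obtain K where K: "K \<ge> 0" "\<And>x y. \<epsilon> \<le> x \<Longrightarrow> x \<le> y \<Longrightarrow> y \<le> a + 1 \<Longrightarrow> g x - g y \<le> K * (y - x)"
    using lipg[OF re(3), of "a + 1"] by blast
  define E where "E = exp (K * (exp (\<mu> * R) * Ptot))"
  have Ep: "0 < E" unfolding E_def by simp
  define \<eta> where "\<eta> = min 1 (\<kappa> / (2 * E))"
  have eta: "0 < \<eta>" "\<eta> \<le> 1" "\<eta> * E \<le> \<kappa> / 2"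
  proof -
    show "0 < \<eta>" "\<eta> \<le> 1" using k Ep by (auto simp: \<eta>_def)
    have "\<eta> \<le> \<kappa> / (2 * E)" by (simp add: \<eta>_def)
    then have "\<eta> * E \<le> \<kappa> / (2 * E) * E" using Ep by (intro mult_right_mono) auto
    then show "\<eta> * E \<le> \<kappa> / 2" using Ep by simp
  qed
  show ?thesis
  proof (intro exI[of _ \<eta>] conjI notI)
    show "0 < \<eta>" using eta by simp
    assume Pb: "PP (a + \<eta>)"
    define b where "b = a + \<eta>"
    have ab: "a < b" "b \<le> a + 1" using eta by (auto simp: b_def)
    obtain \<epsilon>b where eb: "0 < \<epsilon>b" "\<And>t. t \<in> {0..r2} \<Longrightarrow> \<epsilon>b \<le> vsol \<epsilon>b b t"
      using Pb r2 r1 unfolding PP_def Pos_def b_def by (meson atLeastLessThan_iff order_le_less_trans order_less_imp_le)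
    define \<epsilon>' where "\<epsilon>' = min \<epsilon> \<epsilon>b"
    have e': "0 < \<epsilon>'" "\<epsilon>' \<le> \<epsilon>" "\<epsilon>' \<le> \<epsilon>b" using re eb by (auto simp: \<epsilon>'_def)
    have vbeq: "vsol \<epsilon>' b t = vsol \<epsilon>b b t" if t: "t \<in> {0..r2}" for t
    proof (rule vsol_local[OF eb(1) e'(1)])
      fix s assume "s \<in> {0..t}"
      then show "max \<epsilon>b \<epsilon>' \<le> vsol \<epsilon>b b s" using eb(2)[of s] e' t by auto
    qed (use t r2 in auto)
    have vaeq: "vsol \<epsilon>' a t = vsol \<epsilon> a t" if t: "t \<in> {0..r}" for t
    proof (rule vsol_local[OF re(3) e'(1)])
      fix s assume "s \<in> {0..t}"
      then show "max \<epsilon> \<epsilon>' \<le> vsol \<epsilon> a s" using re(4)[of s] e' t by auto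
    qed (use t re r1 in auto)
    have cmp: "b - a \<le> vsol \<epsilon>' b t - vsol \<epsilon>' a t" if "0 \<le> t" "t < R" for t
      by (rule vsol_cmp[OF e'(1) order_refl ab(1) that])
    have r': "0 \<le> r" "r < R" using re r1 by auto
    have gr: "vsol \<epsilon>' b r - vsol \<epsilon>' a r \<le> (b - a) * exp (K * MM r)"
    proof (rule gron[OF adm_fe[OF e'(1)] adm_fe[OF e'(1)] vsol[OF e'(1)] vsol[OF e'(1)] r' K(1)])
      fix t assume t: "t \<in> {0..r}"
      show vw: "vsol \<epsilon>' a t \<le> vsol \<epsilon>' b t" using cmp[of t] t r' ab by auto
      have va: "\<epsilon> \<le> vsol \<epsilon>' a t" using vaeq[OF t] re(4)[OF t] by simp
      have vb: "vsol \<epsilon>' b t \<le> b" using vsol_le[OF e'(1)] t r' by auto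
      have f1: "fe \<epsilon>' (vsol \<epsilon>' a t) = g (vsol \<epsilon>' a t)" unfolding fe_def using va e' by simp
      have f2: "fe \<epsilon>' (vsol \<epsilon>' b t) = g (vsol \<epsilon>' b t)" unfolding fe_def using va vw e' by simp
      have "g (vsol \<epsilon>' b t) \<le> g (vsol \<epsilon>' a t)" using gdecr va vw re(3) by auto
      moreover have "g (vsol \<epsilon>' a t) - g (vsol \<epsilon>' b t) \<le> K * (vsol \<epsilon>' b t - vsol \<epsilon>' a t)"
        using K(2)[OF va vw] vb ab by auto
      ultimately show "0 \<le> fe \<epsilon>' (vsol \<epsilon>' a t) - fe \<epsilon>' (vsol \<epsilon>' b t) \<and>
          fe \<epsilon>' (vsol \<epsilon>' a t) - fe \<epsilon>' (vsol \<epsilon>' b t) \<le> K * (vsol \<epsilon>' b t - vsol \<epsilon>' a t)"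
        unfolding f1 f2 by simp
    qed
    have "exp (K * MM r) \<le> E" unfolding E_def using MM_bound[OF r'] K(1) by (simp add: mult_left_mono)
    then have "(b - a) * exp (K * MM r) \<le> \<eta> * E" using ab by (simp add: b_def mult_left_mono)
    then have vbr: "vsol \<epsilon>' b r \<le> vsol \<epsilon> a r + \<kappa> / 2" using gr eta vaeq[of r] r' by simp
    have "vsol \<epsilon>' b r2 \<le> vsol \<epsilon>' b r - (r2^2 - r^2) / (2 * N)"
      by (rule sol_drop[OF adm_fe[OF e'(1)] vsol[OF e'(1)]]) (use r' re r2 in auto)
    moreover have "c0 \<le> (r2^2 - r^2) / (2 * N)" unfolding c0_def
      using re r' by (intro divide_right_mono) (auto intro!: power_mono)
    ultimately have "vsol \<epsilon>' b r2 < 0" using vbr re(5) k by simp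
    moreover have "0 < vsol \<epsilon>' b r2"
    proof -
      have "r2 \<in> {0..r2}" using r2 r1 by auto
      then have "vsol \<epsilon>' b r2 = vsol \<epsilon>b b r2" "\<epsilon>b \<le> vsol \<epsilon>b b r2" using vbeq eb(2) by auto
      then show ?thesis using eb(1) by simp
    qed
    ultimately show False by simp
  qed
qed

end


context rad begin

lemma shoot:
  "\<exists>as>0. \<exists>V. (\<forall>r\<in>{0..<R}. 0 < V r) \<and> (V \<longlongrightarrow> 0) (at_left R) \<and>
     (\<forall>r\<in>{0..<R}. \<exists>\<epsilon>>0. \<forall>t\<in>{0..r}. V t = vsol \<epsilon> as t \<and> \<epsilon> \<le> vsol \<epsilon> as t)"
proof -
  define A where "A = {a. 0 < a \<and> \<not> PP a}"
  define a0 where "a0 = R^2 / (16 * N)"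
  have a0: "0 < a0" "a0 \<in> A" using small_not_PP Rpos by (auto simp: A_def a0_def)
  have Ane: "A \<noteq> {}" using a0 by auto
  have Aub: "a < abig" if "a \<in> A" for a
  proof (rule ccontr)
    assume "\<not> a < abig"
    then have "PP a" using big_PP by simp
    then show False using that by (simp add: A_def)
  qed
  have Abd: "bdd_above A" using Aub by (intro bdd_aboveI[of _ abig]) (auto intro: less_imp_le)
  define as where "as = Sup A"
  have as0: "a0 \<le> as" unfolding as_def by (rule cSup_upper[OF a0(2) Abd])
  then have asp: "0 < as" using a0 by simp
  have PPas: "PP as"
  proof (rule ccontr)
    assume "\<not> PP as"
    then obtain \<eta> where "\<eta> > 0" "\<not> PP (as + \<eta>)" using PP_open[OF asp] by blast
    then have "as + \<eta> \<in> A" using asp by (simp add: A_def)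
    then have "as + \<eta> \<le> as" unfolding as_def by (rule cSup_upper[OF _ Abd])
    then show False using \<open>\<eta> > 0\<close> by simp
  qed
  have notPP: "\<not> PP a" if "0 < a" "a < as" for a
  proof
    assume Pa: "PP a"
    have "b \<le> a" if "b \<in> A" for b
    proof (rule ccontr)
      assume "\<not> b \<le> a"
      then have "PP b" using PP_up[OF Pa] by simp
      then show False using that by (simp add: A_def)
    qed
    then have "as \<le> a" unfolding as_def by (rule cSup_least[OF Ane])
    then show False using that by simp
  qed
  define eps where "eps r = (SOME \<epsilon>. 0 < \<epsilon> \<and> (\<forall>t\<in>{0..r}. \<epsilon> \<le> vsol \<epsilon> as t))" for r
  have eps: "0 < eps r \<and> (\<forall>t\<in>{0..r}. eps r \<le> vsol (eps r) as t)" if "r \<in> {0..<R}" for r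
  proof -
    have "\<exists>\<epsilon>. 0 < \<epsilon> \<and> (\<forall>t\<in>{0..r}. \<epsilon> \<le> vsol \<epsilon> as t)" using PPas that unfolding PP_def Pos_def by blast
    then show ?thesis unfolding eps_def by (rule someI_ex)
  qed
  define V where "V r = vsol (eps r) as r" for r
  have agree: "V t = vsol \<epsilon> as t"
    if r: "0 \<le> r" "r < R" and e: "0 < \<epsilon>" "\<forall>t\<in>{0..r}. \<epsilon> \<le> vsol \<epsilon> as t" and t: "t \<in> {0..r}" for r \<epsilon> t
  proof -
    have t': "t \<in> {0..<R}" using t r by auto
    have et: "0 < eps t" "\<And>s. s \<in> {0..t} \<Longrightarrow> eps t \<le> vsol (eps t) as s" using eps[OF t'] by auto
    define em where "em = min \<epsilon> (eps t)"
    have em: "0 < em" "em \<le> \<epsilon>" "em \<le> eps t" using e et by (auto simp: em_def)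
    have 1: "vsol em as t = vsol \<epsilon> as t"
    proof (rule vsol_local[OF e(1) em(1)])
      fix s assume "s \<in> {0..t}"
      then show "max \<epsilon> em \<le> vsol \<epsilon> as s" using e(2) em t by auto
    qed (use t' in auto)
    have 2: "vsol em as t = vsol (eps t) as t"
    proof (rule vsol_local[OF et(1) em(1)])
      fix s assume "s \<in> {0..t}"
      then show "max (eps t) em \<le> vsol (eps t) as s" using et(2) em by auto
    qed (use t' in auto)
    show ?thesis unfolding V_def using 1 2 by simp
  qed
  have Vpos: "0 < V r" if rr: "r \<in> {0..<R}" for r
  proof -
    have "eps r \<le> vsol (eps r) as r" "0 < eps r" using eps[OF rr] rr by auto
    then show ?thesis unfolding V_def by simp
  qed
  have Vmono: "V r \<le> V t" if "0 \<le> t" "t \<le> r" "r < R" for r t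
  proof -
    have r': "r \<in> {0..<R}" using that by auto
    have "V r = vsol (eps r) as r" "V t = vsol (eps r) as t"
      using agree[of r "eps r"] eps[OF r'] that by auto
    moreover have "vsol (eps r) as r \<le> vsol (eps r) as t"
      using sol_mono[OF adm_fe vsol] eps[OF r'] that by auto
    ultimately show ?thesis by simp
  qed
  have small: "\<exists>r0\<in>{0..<R}. V r0 < \<kappa>" if k: "0 < \<kappa>" for \<kappa>
  proof (rule ccontr)
    assume "\<not> ?thesis"
    then have Vk: "\<kappa> \<le> V r" if "r \<in> {0..<R}" for r using that by force
    define \<epsilon> where "\<epsilon> = \<kappa> / 2"
    have e: "0 < \<epsilon>" "\<epsilon> < \<kappa>" using k by (auto simp: \<epsilon>_def)
    have wV: "vsol \<epsilon> as r = V r" if r: "r \<in> {0..<R}" for r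
    proof -
      have "vsol \<epsilon> as r = vsol (eps r) as r"
      proof (rule vsol_local[of "eps r" \<epsilon>])
        fix t assume t: "t \<in> {0..r}"
        have "V t = vsol (eps r) as t" using agree[of r "eps r" t] eps[OF r] r t by auto
        then show "max (eps r) \<epsilon> \<le> vsol (eps r) as t"
          using Vk[of t] eps[OF r] t r e by auto
      qed (use eps[OF r] e r in auto)
      then show ?thesis unfolding V_def .
    qed
    obtain K where K: "K \<ge> 0" "\<And>x y. \<epsilon> \<le> x \<Longrightarrow> x \<le> y \<Longrightarrow> y \<le> as \<Longrightarrow> g x - g y \<le> K * (y - x)"
      using lipg[OF e(1), of as] by blast
    define E where "E = exp (K * (exp (\<mu> * R) * Ptot))"
    have Ep: "0 < E" unfolding E_def by simp
    define \<eta> where "\<eta> = min (as / 2) (\<kappa> / (2 * E))"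
    have eta: "0 < \<eta>" "\<eta> < as" "\<eta> * E \<le> \<kappa> / 2"
    proof -
      show "0 < \<eta>" "\<eta> < as" using k Ep asp by (auto simp: \<eta>_def)
      have "\<eta> \<le> \<kappa> / (2 * E)" by (simp add: \<eta>_def)
      then have "\<eta> * E \<le> \<kappa> / (2 * E) * E" using Ep by (intro mult_right_mono) auto
      then show "\<eta> * E \<le> \<kappa> / 2" using Ep by simp
    qed
    define a where "a = as - \<eta>"
    have a: "0 < a" "a < as" using eta by (auto simp: a_def)
    have "PP a" unfolding PP_def Pos_def
    proof (intro ballI exI[of _ \<epsilon>] conjI)
      fix r t assume r: "r \<in> {0..<R}" and t: "t \<in> {0..r}"
      have t': "0 \<le> t" "t < R" using r t by auto
      have cmp: "as - a \<le> vsol \<epsilon> as s - vsol \<epsilon> a s" if "0 \<le> s" "s < R" for s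
        by (rule vsol_cmp[OF e(1) order_refl a(2) that])
      have gr: "vsol \<epsilon> as t - vsol \<epsilon> a t \<le> (as - a) * exp (K * MM t)"
      proof (rule gron[OF adm_fe[OF e(1)] adm_fe[OF e(1)] vsol[OF e(1)] vsol[OF e(1)] t' K(1)])
        fix s assume s: "s \<in> {0..t}"
        have s': "s \<in> {0..<R}" using s t' by auto
        show vw: "vsol \<epsilon> a s \<le> vsol \<epsilon> as s" using cmp[of s] s' a by auto
        have w: "\<kappa> \<le> vsol \<epsilon> as s" using wV[OF s'] Vk[OF s'] by simp
        have wle: "vsol \<epsilon> as s \<le> as" using vsol_le[OF e(1)] s' by auto
        have f2: "fe \<epsilon> (vsol \<epsilon> as s) = g (vsol \<epsilon> as s)" unfolding fe_def using w e by simp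
        have m: "\<epsilon> \<le> max (vsol \<epsilon> a s) \<epsilon>" "max (vsol \<epsilon> a s) \<epsilon> \<le> vsol \<epsilon> as s" using vw w e by auto
        have "g (vsol \<epsilon> as s) \<le> g (max (vsol \<epsilon> a s) \<epsilon>)" using gdecr m e by auto
        moreover have "g (max (vsol \<epsilon> a s) \<epsilon>) - g (vsol \<epsilon> as s) \<le> K * (vsol \<epsilon> as s - max (vsol \<epsilon> a s) \<epsilon>)"
          using K(2)[OF m wle] .
        moreover have "K * (vsol \<epsilon> as s - max (vsol \<epsilon> a s) \<epsilon>) \<le> K * (vsol \<epsilon> as s - vsol \<epsilon> a s)"
          using K(1) by (intro mult_left_mono) auto
        ultimately show "0 \<le> fe \<epsilon> (vsol \<epsilon> a s) - fe \<epsilon> (vsol \<epsilon> as s) \<and>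
            fe \<epsilon> (vsol \<epsilon> a s) - fe \<epsilon> (vsol \<epsilon> as s) \<le> K * (vsol \<epsilon> as s - vsol \<epsilon> a s)"
          unfolding f2 unfolding fe_def by simp
      qed
      have "exp (K * MM t) \<le> E" unfolding E_def using MM_bound[OF t'] K(1) by (simp add: mult_left_mono)
      then have "(as - a) * exp (K * MM t) \<le> \<eta> * E" using a by (simp add: a_def mult_left_mono)
      then have "vsol \<epsilon> as t - vsol \<epsilon> a t \<le> \<kappa> / 2" using gr eta by simp
      moreover have "\<kappa> \<le> vsol \<epsilon> as t" using wV[of t] Vk[of t] t' by simp
      ultimately show "\<epsilon> \<le> vsol \<epsilon> a t" unfolding \<epsilon>_def by simp
    qed (use e in auto)
    then show False using notPP[OF a] by simp
  qed
  have lim: "(V \<longlongrightarrow> 0) (at_left R)"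
  proof (rule order_tendstoI)
    fix y :: real assume "y < 0"
    have H1: "y < V x" if "x \<in> {0<..<R}" for x
      using Vpos[of x] that \<open>y < 0\<close> by auto
    show "\<forall>\<^sub>F x in at_left R. y < V x"
      by (rule eventually_mono[OF eventually_at_left_real[OF Rpos]]) (rule H1)
  next
    fix y :: real assume "0 < y"
    then obtain r0 where r0: "r0 \<in> {0..<R}" "V r0 < y" using small by blast
    have H2: "V x < y" if "x \<in> {r0<..<R}" for x
      using Vmono[of r0 x] r0 that by auto
    have r0R: "r0 < R" using r0 by auto
    show "\<forall>\<^sub>F x in at_left R. V x < y"
      by (rule eventually_mono[OF eventually_at_left_real[OF r0R]]) (rule H2)
  qed
  have loc: "\<exists>\<epsilon>>0. \<forall>t\<in>{0..r}. V t = vsol \<epsilon> as t \<and> \<epsilon> \<le> vsol \<epsilon> as t" if r: "r \<in> {0..<R}" for r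
    using agree[of r "eps r"] eps[OF r] r by (intro exI[of _ "eps r"]) auto
  show ?thesis using asp Vpos lim loc by blast
qed

end


context rad begin

lemma Fn_cont_on:
  assumes f: "adm f Cf" and s: "sol f a w" and r1: "0 \<le> r1" "r1 < R"
  shows "continuous_on {0..r1} (Fn f w)"
proof -
  have "continuous_on {0..r1} (\<lambda>t. p (R - t) * f (w t) + 1)"
    by (intro continuous_intros pR_cont r1 sol_fv_cont[OF f s r1])
  then show ?thesis unfolding Fn_def[abs_def] .
qed

lemma Y_deriv:
  assumes f: "adm f Cf" and s: "sol f a w" and x: "0 < x" "x < R"
  shows "(Y f w has_real_derivative rho x * Fn f w x) (at x)"
proof -
  define r1 where "r1 = (x + R) / 2"
  have r1: "0 \<le> r1" "r1 < R" "x < r1" using x by (auto simp: r1_def)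
  have "(Y f w has_real_derivative rho x * Fn f w x) (at x within {0..r1})"
    unfolding Y_def[abs_def] by (rule integral_has_real_derivative[OF sol_Fn_cont[OF f s r1(1,2)]]) (use x r1 in auto)
  then show ?thesis using at_within_Icc_at[of 0 x r1] x r1 by simp
qed

lemma q_deriv:
  assumes f: "adm f Cf" and s: "sol f a w" and x: "0 < x" "x < R"
  shows "(q f w has_real_derivative Fn f w x - q f w x * ((real N - 1) / x - \<mu>)) (at x)"
proof -
  have rp: "rho x \<noteq> 0" using rho_pos[OF x(1)] by simp
  have "((\<lambda>t. Y f w t / rho t) has_real_derivative
      ((rho x * Fn f w x) * rho x - Y f w x * (rho x * ((real N - 1) / x - \<mu>))) / (rho x * rho x)) (at x)"
    by (rule DERIV_divide[OF Y_deriv[OF f s x] rho_deriv[OF x(1)] rp])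
  moreover have "((rho x * Fn f w x) * rho x - Y f w x * (rho x * ((real N - 1) / x - \<mu>))) / (rho x * rho x)
      = Fn f w x - q f w x * ((real N - 1) / x - \<mu>)"
    unfolding q_def using rp by (simp add: field_simps)
  ultimately show ?thesis unfolding q_def[abs_def] by simp
qed

lemma Fn_isCont:
  assumes f: "adm f Cf" and s: "sol f a w" and x: "0 < x" "x < R"
  shows "isCont (Fn f w) x"
proof -
  define r1 where "r1 = (x + R) / 2"
  have r1: "0 \<le> r1" "r1 < R" "x < r1" using x by (auto simp: r1_def)
  show ?thesis using continuous_on_interior[OF Fn_cont_on[OF f s r1(1,2)]] x r1 by simp
qed

lemma right0:
  assumes c: "continuous_on {0..r1} h" and r1: "0 < r1"
  shows "(h \<longlongrightarrow> h 0) (at_right 0)"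
proof -
  have "(h \<longlongrightarrow> h 0) (at 0 within {0..r1})" using c r1 unfolding continuous_on_def by auto
  then show ?thesis using at_within_Icc_at_right[OF r1] by simp
qed

lemma rho_le_pow: "0 \<le> t \<Longrightarrow> rho t \<le> t ^ (N - 1)"
  unfolding rho_def using mupos by (simp add: mult_left_le)

lemma rho_key: "0 < x \<Longrightarrow> x * rho x = x ^ N * exp (- \<mu> * x)"
proof -
  obtain k where k: "N = Suc k" using N2 by (metis Suc_diff_1 not_numeral_le_zero order_less_le_trans pos2 zero_less_iff_neq_zero le_eq_less_or_eq)
  show ?thesis unfolding rho_def by (simp add: k)
qed

lemma I_upper: assumes elim: "0 < x" shows "integral {0..x} rho / (x * rho x) \<le> exp (\<mu> * x) / N"
proof -
  have "integral {0..x} rho \<le> integral {0..x} (\<lambda>t. t ^ (N - 1))"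
    by (rule integral_le) (use rho_le_pow in \<open>auto intro!: rho_integrable integrable_continuous_interval continuous_intros\<close>)
  also have "\<dots> = x ^ N / N" using int_pow[of x] elim by (simp add: integral_unique)
  also have "\<dots> = exp (\<mu> * x) * (x * rho x) / N" using rho_key[OF elim] by (simp add: exp_minus field_simps)
  finally have "integral {0..x} rho \<le> exp (\<mu> * x) * (x * rho x) / N" .
  moreover have "0 < x * rho x" using rho_pos[OF elim] elim by simp
  ultimately show ?thesis by (simp add: divide_simps mult.commute mult.left_commute)
qed

lemma I_nonneg: "0 < x \<Longrightarrow> 0 \<le> integral {0..x} rho / (x * rho x)"
  using integral_nonneg[OF rho_integrable, of 0 x] rho_nonneg rho_pos[of x] by simp

lemma I_lim: "((\<lambda>x. integral {0..x} rho / (x * rho x)) \<longlongrightarrow> 1 / N) (at_right 0)"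
proof (rule tendsto_sandwich[of "\<lambda>_. 1 / N" _ _ "\<lambda>x. exp (\<mu> * x) / N"])
  have ev: "\<forall>\<^sub>F x in at_right 0. 0 < (x::real)" by (simp add: eventually_at_right_less)
  have key: "x * rho x = x ^ N * exp (- \<mu> * x)" if "0 < x" for x
  proof -
    obtain k where k: "N = Suc k" using N2 by (metis Suc_diff_1 not_numeral_le_zero order_less_le_trans pos2 zero_less_iff_neq_zero le_eq_less_or_eq)
    show ?thesis unfolding rho_def by (simp add: k)
  qed
  show "\<forall>\<^sub>F x in at_right 0. 1 / N \<le> integral {0..x} rho / (x * rho x)"
    using ev
  proof eventually_elim
    case (elim x)
    have "x ^ N / N * exp (- \<mu> * x) \<le> integral {0..x} rho" using int_rho_ge[of x] elim by simp
    then have "(x * rho x) / N \<le> integral {0..x} rho" using key[OF elim] by simp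
    moreover have "0 < x * rho x" using rho_pos[OF elim] elim by simp
    ultimately show ?case by (simp add: divide_simps mult.commute)
  qed
  show "\<forall>\<^sub>F x in at_right 0. integral {0..x} rho / (x * rho x) \<le> exp (\<mu> * x) / N"
    using ev
  proof eventually_elim
    case (elim x)
    have "integral {0..x} rho \<le> integral {0..x} (\<lambda>t. t ^ (N - 1))"
      by (rule integral_le) (use rho_le_pow in \<open>auto intro!: rho_integrable integrable_continuous_interval continuous_intros\<close>)
    also have "\<dots> = x ^ N / N" using int_pow[of x] elim by (simp add: integral_unique)
    also have "\<dots> = exp (\<mu> * x) * (x * rho x) / N" using key[OF elim] by (simp add: exp_minus field_simps)
    finally have "integral {0..x} rho \<le> exp (\<mu> * x) * (x * rho x) / N" .
    moreover have "0 < x * rho x" using rho_pos[OF elim] elim by simp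
    ultimately show ?case by (simp add: divide_simps mult.commute mult.left_commute)
  qed
  show "((\<lambda>x. exp (\<mu> * x) / N) \<longlongrightarrow> 1 / N) (at_right 0)"
  proof -
    have "((\<lambda>x. exp (\<mu> * x) / N) \<longlongrightarrow> exp (\<mu> * 0) / N) (at_right 0)"
      by (intro tendsto_divide tendsto_exp tendsto_mult tendsto_const tendsto_ident_at) auto
    then show ?thesis by simp
  qed
qed (simp)

lemma q_limit:
  assumes f: "adm f Cf" and s: "sol f a w"
  shows "((\<lambda>x. q f w x / x) \<longlongrightarrow> Fn f w 0 / N) (at_right 0)"
proof -
  define h where "h = Fn f w"
  define h0 where "h0 = h 0"
  define I where "I x = integral {0..x} rho / (x * rho x)" for x
  define E where "E x = integral {0..x} (\<lambda>t. rho t * (h t - h0)) / (x * rho x)" for x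
  have r1: "0 \<le> R / 2" "R / 2 < R" "0 < R / 2" using Rpos by auto
  have hc: "continuous_on {0..R/2} h" unfolding h_def using Fn_cont_on[OF f s r1(1,2)] .
  have eq: "q f w x / x = h0 * I x + E x" if x: "0 < x" "x < R / 2" for x
  proof -
    have i1: "(\<lambda>t. rho t * h t) integrable_on {0..x}"
      unfolding h_def using sol_hi[OF f s, of x] x by auto
    have i2: "(\<lambda>t. h0 * rho t) integrable_on {0..x}"
      by (intro integrable_continuous_interval continuous_intros rho_cont)
    have "Y f w x = integral {0..x} (\<lambda>t. h0 * rho t) + integral {0..x} (\<lambda>t. rho t * h t - h0 * rho t)"
      unfolding Y_def h_def[symmetric] using Henstock_Kurzweil_Integration.integral_diff[OF i1 i2] by simp
    also have "\<dots> = h0 * integral {0..x} rho + integral {0..x} (\<lambda>t. rho t * (h t - h0))"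
      by (simp add: integral_cmult_real algebra_simps)
    finally show ?thesis unfolding q_def I_def E_def by (simp add: add_divide_distrib mult.commute)
  qed
  have Elim: "(E \<longlongrightarrow> 0) (at_right 0)"
  proof (rule tendstoI)
    fix e :: real assume e: "0 < e"
    define e' where "e' = e * N / (2 * exp (\<mu> * R))"
    have e': "0 < e'" using e by (simp add: e'_def)
    have "\<forall>\<^sub>F t in at_right 0. dist (h t) (h 0) < e'"
      using tendstoD[OF right0[OF hc r1(3)] e'] .
    then obtain b where b: "0 < b" "\<And>t. 0 < t \<Longrightarrow> t < b \<Longrightarrow> dist (h t) (h 0) < e'"
      unfolding eventually_at_right_field by auto
    have ev: "\<forall>\<^sub>F x in at_right 0. 0 < x \<and> x < min b (R / 2)"
      unfolding eventually_at_right_field by (intro exI[of _ "min b (R/2)"]) (use b r1 in auto)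
    then show "\<forall>\<^sub>F x in at_right 0. dist (E x) 0 < e"
    proof eventually_elim
      case (elim x)
      have hb: "\<bar>h t - h0\<bar> \<le> e'" if t: "t \<in> {0..x}" for t
        using b(2)[of t] t elim e' by (cases "t = 0") (auto simp: h0_def dist_real_def)
      have i: "(\<lambda>t. rho t * (h t - h0)) integrable_on {0..x}"
        by (intro integrable_continuous_interval continuous_intros rho_cont continuous_on_subset[OF hc])
           (use elim in auto)
      have "\<bar>integral {0..x} (\<lambda>t. rho t * (h t - h0))\<bar> \<le> integral {0..x} (\<lambda>t. e' * rho t)"
      proof -
        have "norm (rho t * (h t - h0)) \<le> e' * rho t" if t: "t \<in> {0..x}" for t
        proof -
          have "rho t * \<bar>h t - h0\<bar> \<le> rho t * e'" using hb[OF t] rho_nonneg[of t] t by (intro mult_left_mono) auto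
          then show ?thesis using rho_nonneg[of t] t by (simp add: abs_mult mult.commute)
        qed
        moreover have "(\<lambda>t. e' * rho t) integrable_on {0..x}"
          by (intro integrable_continuous_interval continuous_intros rho_cont)
        ultimately show ?thesis using integral_norm_bound_integral[OF i, of "\<lambda>t. e' * rho t"] by auto
      qed
      also have "\<dots> = e' * integral {0..x} rho" by (simp add: integral_cmult_real)
      finally have "\<bar>E x\<bar> \<le> e' * I x"
        unfolding E_def I_def using rho_pos[of x] elim by (simp add: abs_div divide_right_mono)
      also have "\<dots> \<le> e' * (exp (\<mu> * x) / N)" unfolding I_def using I_upper[of x] elim e' by (intro mult_left_mono) auto
      also have "\<dots> \<le> e' * (exp (\<mu> * R) / N)" using e' elim mupos r1 by (intro mult_left_mono divide_right_mono) auto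
      also have "\<dots> = e / 2" unfolding e'_def by simp
      finally show ?case using e by simp
    qed
  qed
  have "((\<lambda>x. h0 * I x + E x) \<longlongrightarrow> h0 * (1 / N) + 0) (at_right 0)"
    unfolding I_def by (intro tendsto_add tendsto_mult tendsto_const I_lim Elim[unfolded I_def])
  moreover have "\<forall>\<^sub>F x in at_right 0. h0 * I x + E x = q f w x / x"
  proof (rule eventually_mono)
    show "\<forall>\<^sub>F x in at_right 0. 0 < x \<and> x < R / 2"
      unfolding eventually_at_right_field by (intro exI[of _ "R/2"]) (use r1 in auto)
  qed (use eq in auto)
  ultimately show ?thesis unfolding h0_def h_def by (simp add: tendsto_cong)
qed

lemma w_limit0:
  assumes f: "adm f Cf" and s: "sol f a w"
  shows "((\<lambda>x. (w x - w 0) / x) \<longlongrightarrow> 0) (at_right 0)"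
proof (rule Lim_null_comparison)
  have r1: "0 \<le> R / 2" "R / 2 < R" "0 < R / 2" using Rpos by auto
  define B where "B = (p (R - R / 2) * Cf + 1) * exp (\<mu> * R)"
  show "((\<lambda>x. B * x) \<longlongrightarrow> 0) (at_right 0)"
    using tendsto_mult[OF tendsto_const tendsto_ident_at, of B 0 "{0<..}"] by simp
  show "\<forall>\<^sub>F x in at_right 0. norm ((w x - w 0) / x) \<le> B * x"
  proof (rule eventually_mono)
    show "\<forall>\<^sub>F x in at_right 0. 0 < x \<and> x < R / 2"
      unfolding eventually_at_right_field by (intro exI[of _ "R/2"]) (use r1 in auto)
    fix x assume "0 < x \<and> x < R / 2"
    then have x: "0 < x" "x < R / 2" by auto
    have hi: "(\<lambda>t. rho t * Fn f w t) integrable_on {0..R/2}" using sol_hi[OF f s r1(1,2)] .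
    have qb: "norm (q f w t) \<le> B * x" if t: "t \<in> {0..x}" for t
    proof -
      have "\<bar>q f w t\<bar> \<le> (p (R - R / 2) * Cf + 1) * t * exp (\<mu> * t)"
        using q_bound[OF f r1(1,2) hi, of t] t x by auto
      also have "\<dots> \<le> (p (R - R / 2) * Cf + 1) * x * exp (\<mu> * R)"
      proof -
        have "0 \<le> p (R - R / 2) * Cf + 1" using pR_bound[of "R/2" 0] r1 adm_Cf[OF f] by auto
        moreover have "t * exp (\<mu> * t) \<le> x * exp (\<mu> * R)" using t x mupos r1 by (intro mult_mono) auto
        ultimately show ?thesis by (simp add: mult.assoc mult_left_mono)
      qed
      finally show ?thesis unfolding B_def by (simp add: mult_ac)
    qed
    have qi: "q f w integrable_on {0..x}"
      using sol_q_cont[OF f s, of x] x integrable_continuous_interval by auto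
    have "norm (integral {0..x} (q f w)) \<le> integral {0..x} (\<lambda>t. B * x)"
      by (rule integral_norm_bound_integral[OF qi _ qb]) auto
    then have "\<bar>integral {0..x} (q f w)\<bar> \<le> B * x * x" using x by (simp add: mult_ac)
    moreover have "w x - w 0 = - integral {0..x} (q f w)"
      using sol_eq[OF s, of x] sol_0[OF s] x by simp
    ultimately show "norm ((w x - w 0) / x) \<le> B * x" using x by (simp add: divide_le_eq abs_div)
  qed
qed

lemma q_lim0:
  assumes f: "adm f Cf" and s: "sol f a w"
  shows "(q f w \<longlongrightarrow> 0) (at_right 0)"
proof -
  have r1: "0 \<le> R / 2" "R / 2 < R" "0 < R / 2" using Rpos by auto
  show ?thesis using right0[OF sol_q_cont[OF f s r1(1,2)] r1(3)] by (simp add: q_def)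
qed

lemma Fn_lim0:
  assumes f: "adm f Cf" and s: "sol f a w"
  shows "(Fn f w \<longlongrightarrow> Fn f w 0) (at_right 0)"
proof -
  have r1: "0 \<le> R / 2" "R / 2 < R" "0 < R / 2" using Rpos by auto
  show ?thesis using right0[OF Fn_cont_on[OF f s r1(1,2)] r1(3)] .
qed

end


lemma mat_form:
  fixes x h :: "real^'n" and a b :: real
  shows "((\<chi> i j. a * x$i * x$j + (if i = j then b else 0)) :: real^'n^'n) *v h = (a * (x \<bullet> h)) *\<^sub>R x + b *\<^sub>R h"
proof -
  have "(\<Sum>j\<in>UNIV. (a * x$i * x$j + (if i = j then b else 0)) * h$j) = a * (x \<bullet> h) * x$i + b * h$i" for i
  proof -
    have pt: "(a * x$i * x$j + (if i = j then b else 0)) * h$j = (a * x$i) * (x$j * h$j) + (if i = j then b * h$j else 0)" for j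
      by (cases "i = j") (auto simp: algebra_simps)
    have "(\<Sum>j\<in>UNIV. (a * x$i * x$j + (if i = j then b else 0)) * h$j)
        = (\<Sum>j\<in>UNIV. (a * x$i) * (x$j * h$j)) + (\<Sum>j\<in>UNIV. (if i = j then b * h$j else 0))"
      unfolding pt by (rule sum.distrib)
    also have "\<dots> = a * x$i * (x \<bullet> h) + b * h$i"
      by (simp add: sum_distrib_left[symmetric] inner_vec_def)
    finally show ?thesis by simp
  qed
  then show ?thesis by (simp add: vec_eq_iff matrix_vector_mult_def)
qed

lemma trace_form:
  fixes x :: "real^'n" and a b :: real
  shows "trace_mat ((\<chi> i j. a * x$i * x$j + (if i = j then b else 0)) :: real^'n^'n) = a * (norm x)^2 + CARD('n) * b"
proof -
  have "trace_mat ((\<chi> i j. a * x$i * x$j + (if i = j then b else 0)) :: real^'n^'n)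
      = (\<Sum>i\<in>UNIV. a * (x$i * x$i) + b)" unfolding trace_mat_def by (simp add: mult.assoc)
  also have "\<dots> = a * (\<Sum>i\<in>UNIV. x$i * x$i) + CARD('n) * b"
    by (simp add: sum.distrib sum_distrib_left)
  also have "(\<Sum>i\<in>UNIV. x$i * x$i) = (norm x)^2"
    by (simp add: power2_norm_eq_inner inner_vec_def)
  finally show ?thesis .
qed

lemma filterlim_norm_right: "filterlim (norm :: 'a::real_normed_vector \<Rightarrow> real) (at_right 0) (at 0)"
  unfolding filterlim_at
proof
  show "\<forall>\<^sub>F z in at 0. norm (z::'a) \<in> {0<..} \<and> norm z \<noteq> 0"
    unfolding eventually_at_filter by (intro always_eventually) auto
  show "(norm \<longlongrightarrow> 0) (at (0::'a))"
    using tendsto_norm[OF tendsto_ident_at[of "0::'a" UNIV]] by simp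
qed

definition radu :: "(real \<Rightarrow> real) \<Rightarrow> real^'n \<Rightarrow> real" where
  "radu V x = V (norm x)"
definition radDu :: "(real \<Rightarrow> real) \<Rightarrow> real^'n \<Rightarrow> real^'n" where
  "radDu V1 x = (V1 (norm x) / norm x) *\<^sub>R x"
definition radD2u :: "(real \<Rightarrow> real) \<Rightarrow> (real \<Rightarrow> real) \<Rightarrow> real \<Rightarrow> real^'n \<Rightarrow> real^'n^'n" where
  "radD2u V1 V2 c x = (\<chi> i j. (V2 (norm x) - V1 (norm x) / norm x) / (norm x)^2 * x$i * x$j
      + (if i = j then (if x = 0 then c else V1 (norm x) / norm x) else 0))"

lemma norm_deriv: "(x::real^'n) \<noteq> 0 \<Longrightarrow> (norm has_derivative (\<lambda>h. h \<bullet> sgn x)) (at x)"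
  using has_derivative_norm[of x] by simp

lemma ND1:
  fixes x :: "real^'n"
  assumes x: "x \<noteq> 0" and d1: "(V has_real_derivative V1 (norm x)) (at (norm x))"
  shows "(radu V has_derivative (\<lambda>h. radDu V1 x \<bullet> h)) (at x)"
proof -
  have v: "(V has_derivative (\<lambda>t. V1 (norm x) * t)) (at (norm x))"
    using d1 by (simp add: has_field_derivative_def)
  have c: "((\<lambda>y. V (norm y)) has_derivative (\<lambda>h. V1 (norm x) * (h \<bullet> sgn x))) (at x)"
    using has_derivative_compose[OF norm_deriv[OF x] v] .
  have e: "(\<lambda>h. V1 (norm x) * (h \<bullet> sgn x)) = (\<lambda>h. radDu V1 x \<bullet> h)"
    using x by (auto simp: fun_eq_iff radDu_def sgn_div_norm inner_commute divide_inverse ac_simps)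
  show ?thesis using c unfolding e radu_def[abs_def] .
qed

lemma ND2:
  assumes l0: "((\<lambda>r. (V r - V 0) / r) \<longlongrightarrow> 0) (at_right 0)"
  shows "(radu V has_derivative (\<lambda>h. radDu V1 (0::real^'n) \<bullet> h)) (at 0)"
  unfolding has_derivative_at_alt
proof (intro conjI allI impI)
  show "bounded_linear (\<lambda>h::real^'n. radDu V1 0 \<bullet> h)" by (simp add: radDu_def)
  fix e :: real assume e: "0 < e"
  have "\<forall>\<^sub>F r in at_right 0. dist ((V r - V 0) / r) 0 < e" using tendstoD[OF l0 e] .
  then obtain b where b: "0 < b" "\<And>r. 0 < r \<Longrightarrow> r < b \<Longrightarrow> \<bar>(V r - V 0) / r\<bar> < e"
    unfolding eventually_at_right_field by (auto simp: dist_real_def)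
  show "\<exists>d>0. \<forall>y::real^'n. norm (y - 0) < d \<longrightarrow> norm (radu V y - radu V 0 - radDu V1 0 \<bullet> (y - 0)) \<le> e * norm (y - 0)"
  proof (intro exI[of _ b] conjI allI impI)
    fix y :: "real^'n" assume y: "norm (y - 0) < b"
    show "norm (radu V y - radu V 0 - radDu V1 0 \<bullet> (y - 0)) \<le> e * norm (y - 0)"
    proof (cases "y = 0")
      case True then show ?thesis by (simp add: radu_def)
    next
      case False
      then have "0 < norm y" by simp
      then have "\<bar>(V (norm y) - V 0) / norm y\<bar> < e" using b(2)[of "norm y"] y by simp
      then have "\<bar>V (norm y) - V 0\<bar> \<le> e * norm y" using \<open>0 < norm y\<close> by (simp add: abs_div divide_less_eq)
      then show ?thesis by (simp add: radu_def radDu_def)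
    qed
  qed (use b in auto)
qed

lemma ND3:
  fixes x :: "real^'n"
  assumes x: "x \<noteq> 0" and d2: "(V1 has_real_derivative V2 (norm x)) (at (norm x))"
  shows "(radDu V1 has_derivative (\<lambda>h. radD2u V1 V2 c x *v h)) (at x)"
proof -
  define r where "r = norm x"
  have r: "r \<noteq> 0" "0 < r" using x by (auto simp: r_def)
  have psi: "((\<lambda>s. V1 s / s) has_real_derivative (V2 r * r - V1 r * 1) / (r * r)) (at r)"
    by (rule DERIV_divide[OF d2[folded r_def] DERIV_ident r(1)])
  have psi': "((\<lambda>s. V1 s / s) has_derivative (\<lambda>t. (V2 r * r - V1 r * 1) / (r * r) * t)) (at (norm x))"
    using psi unfolding has_field_derivative_def r_def .
  have c: "((\<lambda>y. V1 (norm y) / norm y) has_derivative (\<lambda>h. (V2 r * r - V1 r * 1) / (r * r) * (h \<bullet> sgn x))) (at x)"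
    using has_derivative_compose[OF norm_deriv[OF x] psi'] .
  have p: "((\<lambda>y. (V1 (norm y) / norm y) *\<^sub>R y) has_derivative
      (\<lambda>h. (V1 (norm x) / norm x) *\<^sub>R h + ((V2 r * r - V1 r * 1) / (r * r) * (h \<bullet> sgn x)) *\<^sub>R x)) (at x)"
    using has_derivative_scaleR[OF c has_derivative_ident] .
  have e: "(\<lambda>h. (V1 (norm x) / norm x) *\<^sub>R h + ((V2 r * r - V1 r * 1) / (r * r) * (h \<bullet> sgn x)) *\<^sub>R x)
      = (\<lambda>h. radD2u V1 V2 c x *v h)"
  proof
    fix h :: "real^'n"
    have "radD2u V1 V2 c x *v h = ((V2 r - V1 r / r) / r^2 * (x \<bullet> h)) *\<^sub>R x + (V1 r / r) *\<^sub>R h"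
      unfolding radD2u_def r_def using x mat_form[of "(V2 (norm x) - V1 (norm x) / norm x) / (norm x)^2" x "V1 (norm x) / norm x" h]
      by simp
    moreover have "(V2 r * r - V1 r * 1) / (r * r) * (h \<bullet> sgn x) = (V2 r - V1 r / r) / r^2 * (x \<bullet> h)"
      using r by (simp add: sgn_div_norm r_def[symmetric] inner_commute field_simps power2_eq_square)
    ultimately show "(V1 (norm x) / norm x) *\<^sub>R h + ((V2 r * r - V1 r * 1) / (r * r) * (h \<bullet> sgn x)) *\<^sub>R x
      = radD2u V1 V2 c x *v h" by (simp add: r_def)
  qed
  show ?thesis using p unfolding e radDu_def[abs_def] .
qed

lemma ND4:
  assumes l1: "((\<lambda>r. V1 r / r) \<longlongrightarrow> c) (at_right 0)"
  shows "(radDu V1 has_derivative (\<lambda>h. radD2u V1 V2 c (0::real^'n) *v h)) (at 0)"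
proof -
  have e: "(\<lambda>h. radD2u V1 V2 c (0::real^'n) *v h) = (\<lambda>h. c *\<^sub>R h)"
  proof
    fix h :: "real^'n"
    show "radD2u V1 V2 c 0 *v h = c *\<^sub>R h"
      unfolding radD2u_def using mat_form[of "(V2 0 - V1 0 / 0) / 0^2" "0::real^'n" c h] by simp
  qed
  show ?thesis unfolding e has_derivative_at_alt
  proof (intro conjI allI impI)
    show "bounded_linear (\<lambda>h::real^'n. c *\<^sub>R h)" by (rule bounded_linear_scaleR_right)
    fix e :: real assume e: "0 < e"
    have "\<forall>\<^sub>F r in at_right 0. dist (V1 r / r) c < e" using tendstoD[OF l1 e] .
    then obtain b where b: "0 < b" "\<And>r. 0 < r \<Longrightarrow> r < b \<Longrightarrow> \<bar>V1 r / r - c\<bar> < e"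
      unfolding eventually_at_right_field by (auto simp: dist_real_def)
    show "\<exists>d>0. \<forall>y::real^'n. norm (y - 0) < d \<longrightarrow> norm (radDu V1 y - radDu V1 0 - c *\<^sub>R (y - 0)) \<le> e * norm (y - 0)"
    proof (intro exI[of _ b] conjI allI impI)
      fix y :: "real^'n" assume y: "norm (y - 0) < b"
      show "norm (radDu V1 y - radDu V1 0 - c *\<^sub>R (y - 0)) \<le> e * norm (y - 0)"
      proof (cases "y = 0")
        case True then show ?thesis by (simp add: radDu_def)
      next
        case False
        then have "0 < norm y" by simp
        then have "\<bar>V1 (norm y) / norm y - c\<bar> < e" using b(2)[of "norm y"] y by simp
        moreover have "radDu V1 y - radDu V1 0 - c *\<^sub>R (y - 0) = (V1 (norm y) / norm y - c) *\<^sub>R y"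
          by (simp add: radDu_def algebra_simps)
        ultimately show ?thesis using \<open>0 < norm y\<close> by (simp add: mult_right_mono less_imp_le)
      qed
    qed (use b in auto)
  qed
qed

lemma ND6:
  fixes x :: "real^'n" and c :: real
  shows "trace_mat (radD2u V1 V2 c x) = (if x = 0 then real CARD('n) * c
      else V2 (norm x) + (real CARD('n) - 1) * (V1 (norm x) / norm x))"
proof (cases "x = 0")
  case True
  then show ?thesis unfolding radD2u_def
    using trace_form[of "(V2 0 - V1 0 / 0) / 0^2" "0::real^'n" c] by simp
next
  case False
  have "trace_mat (radD2u V1 V2 c x) = (V2 (norm x) - V1 (norm x) / norm x) / (norm x)^2 * (norm x)^2
      + CARD('n) * (V1 (norm x) / norm x)"
    unfolding radD2u_def using False
      trace_form[of "(V2 (norm x) - V1 (norm x) / norm x) / (norm x)^2" x "V1 (norm x) / norm x"] by simp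
  also have "\<dots> = V2 (norm x) + (real CARD('n) - 1) * (V1 (norm x) / norm x)"
  proof -
    have "norm x \<noteq> 0" using False by simp
    then show ?thesis by (simp add: field_simps power2_eq_square)
  qed
  finally show ?thesis using False by simp
qed

lemma ev_ne0: "(x::'a::real_normed_vector) \<noteq> 0 \<Longrightarrow> \<forall>\<^sub>F y in at x. y \<noteq> 0"
  unfolding eventually_at by (intro exI[of _ "norm x"]) (auto simp: dist_norm)

lemma ev_ne0': "\<forall>\<^sub>F y in at (0::'a::real_normed_vector). y \<noteq> 0"
  unfolding eventually_at_filter by (intro always_eventually) auto

lemma ND5:
  assumes d2: "\<And>r. 0 < r \<Longrightarrow> r < R \<Longrightarrow> (V1 has_real_derivative V2 r) (at r)"
    and c2: "\<And>r. 0 < r \<Longrightarrow> r < R \<Longrightarrow> isCont V2 r"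
    and l1: "((\<lambda>r. V1 r / r) \<longlongrightarrow> c) (at_right 0)"
    and l2: "(V2 \<longlongrightarrow> c) (at_right 0)"
  shows "continuous_on (ball 0 R) (radD2u V1 V2 c :: real^'n \<Rightarrow> real^'n^'n)"
proof -
  define A where "A r = (V2 r - V1 r / r) / r^2" for r
  define P where "P y = (if y = 0 then c else V1 (norm y) / norm y)" for y :: "real^'n"
  have D: "radD2u V1 V2 c = (\<lambda>y. \<chi> i j. A (norm y) * y$i * y$j + (if i = j then P y else 0))"
    by (auto simp: fun_eq_iff radD2u_def A_def P_def)
  have "isCont (radD2u V1 V2 c) x" if x: "x \<in> ball (0::real^'n) R" for x
  proof -
    have ent: "((\<lambda>y. A (norm y) * y$i * y$j + (if i = j then P y else 0)) \<longlongrightarrow>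
        A (norm x) * x$i * x$j + (if i = j then P x else 0)) (at x)" for i j
    proof (cases "x = 0")
      case False
      define r where "r = norm x"
      have r: "0 < r" "r < R" using x False by (auto simp: r_def)
      have hn: "((\<lambda>y. norm y) \<longlongrightarrow> r) (at x)" unfolding r_def by (intro tendsto_norm tendsto_ident_at)
      have hV2: "((\<lambda>y. V2 (norm y)) \<longlongrightarrow> V2 r) (at x)" by (rule isCont_tendsto_compose[OF c2[OF r] hn])
      have hV1: "((\<lambda>y. V1 (norm y)) \<longlongrightarrow> V1 r) (at x)"
        by (rule isCont_tendsto_compose[OF DERIV_isCont[OF d2[OF r]] hn])
      have hA: "((\<lambda>y. A (norm y)) \<longlongrightarrow> A r) (at x)" unfolding A_def
        by (intro tendsto_divide tendsto_diff tendsto_power hV2 hV1 hn) (use r in auto)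
      have hP0: "((\<lambda>y. V1 (norm y) / norm y) \<longlongrightarrow> V1 r / r) (at x)"
        by (intro tendsto_divide hV1 hn) (use r in auto)
      have hP: "(P \<longlongrightarrow> P x) (at x)"
      proof -
        have "\<forall>\<^sub>F y in at x. V1 (norm y) / norm y = P y" using ev_ne0[OF False] by eventually_elim (simp add: P_def)
        then show ?thesis using hP0 False unfolding P_def[abs_def] r_def by (simp add: tendsto_cong)
      qed
      have hA': "((\<lambda>y. A (norm y)) \<longlongrightarrow> A (norm x)) (at x)" using hA by (simp add: r_def)
      have hPij: "((\<lambda>y. if i = j then P y else 0) \<longlongrightarrow> (if i = j then P x else 0)) (at x)"
        by (cases "i = j") (simp_all add: hP)
      show ?thesis
        by (intro tendsto_add tendsto_mult hA' hPij tendsto_vec_nth tendsto_ident_at)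
    next
      case True
      have lim: "((\<lambda>y. V2 (norm y) - V1 (norm y) / norm y) \<longlongrightarrow> c - c) (at (0::real^'n))"
        using filterlim_compose[OF tendsto_diff[OF l2 l1] filterlim_norm_right] .
      have t1: "((\<lambda>y. A (norm y) * y$i * y$j) \<longlongrightarrow> 0) (at (0::real^'n))"
      proof (rule Lim_null_comparison)
        show "((\<lambda>y. \<bar>V2 (norm y) - V1 (norm y) / norm y\<bar>) \<longlongrightarrow> 0) (at (0::real^'n))"
          using tendsto_rabs_zero[OF lim[simplified]] .
        show "\<forall>\<^sub>F y in at (0::real^'n). norm (A (norm y) * y$i * y$j) \<le> \<bar>V2 (norm y) - V1 (norm y) / norm y\<bar>"
          using ev_ne0'
        proof eventually_elim
          case (elim y)
          have n: "0 < norm y" using elim by simp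
          have "\<bar>y$i\<bar> * \<bar>y$j\<bar> \<le> norm y * norm y"
            by (intro mult_mono component_le_norm_cart) auto
          then have "\<bar>A (norm y)\<bar> * (\<bar>y$i\<bar> * \<bar>y$j\<bar>) \<le> \<bar>A (norm y)\<bar> * (norm y * norm y)"
            by (intro mult_left_mono) auto
          also have "\<dots> = \<bar>V2 (norm y) - V1 (norm y) / norm y\<bar>"
            using n by (simp add: A_def abs_div power2_eq_square)
          finally show ?case by (simp add: abs_mult mult.assoc)
        qed
      qed
      have t2: "((\<lambda>y. if i = j then P y else 0) \<longlongrightarrow> (if i = j then c else 0)) (at (0::real^'n))"
      proof (cases "i = j")
        case True
        have "((\<lambda>y. V1 (norm y) / norm y) \<longlongrightarrow> c) (at (0::real^'n))"
          using filterlim_compose[OF l1 filterlim_norm_right] .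
        moreover have "\<forall>\<^sub>F y in at (0::real^'n). V1 (norm y) / norm y = P y"
          using ev_ne0' by eventually_elim (simp add: P_def)
        ultimately show ?thesis using True by (simp add: tendsto_cong)
      qed simp
      have eq: "A (norm x) * x$i * x$j + (if i = j then P x else 0) = 0 + (if i = j then c else 0)"
        using True by (simp add: P_def)
      show ?thesis unfolding eq using tendsto_add[OF t1 t2] True by simp
    qed
    have "((\<lambda>y. \<chi> i j. A (norm y) * y$i * y$j + (if i = j then P y else 0)) \<longlongrightarrow>
        (\<chi> i j. A (norm x) * x$i * x$j + (if i = j then P x else 0))) (at x)"
      by (intro tendsto_vec_lambda ent)
    then show ?thesis unfolding D isCont_def .
  qed
  then show ?thesis by (intro continuous_at_imp_continuous_on) auto
qed


context rad begin

lemma final1D: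
  "\<exists>V V1 V2 c.
     (\<forall>r\<in>{0..<R}. 0 < V r) \<and> (V \<longlongrightarrow> 0) (at_left R)
   \<and> (\<forall>r. 0 < r \<longrightarrow> r < R \<longrightarrow> (V has_real_derivative V1 r) (at r))
   \<and> (\<forall>r. 0 < r \<longrightarrow> r < R \<longrightarrow> (V1 has_real_derivative V2 r) (at r))
   \<and> (\<forall>r. 0 < r \<longrightarrow> r < R \<longrightarrow> isCont V2 r)
   \<and> ((\<lambda>r. (V r - V 0) / r) \<longlongrightarrow> 0) (at_right 0)
   \<and> ((\<lambda>r. V1 r / r) \<longlongrightarrow> c) (at_right 0) \<and> (V2 \<longlongrightarrow> c) (at_right 0)
   \<and> (\<forall>r. 0 < r \<longrightarrow> r < R \<longrightarrow> - (V2 r + (real N - 1) * (V1 r / r)) = p (R - r) * g (V r) + 1 + \<mu> * \<bar>V1 r\<bar>)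
   \<and> - (real N * c) = p R * g (V 0) + 1"
proof -
  obtain as V where as: "0 < as" and Vpos: "\<forall>r\<in>{0..<R}. 0 < V r" and Vlim: "(V \<longlongrightarrow> 0) (at_left R)"
    and loc: "\<And>r. r \<in> {0..<R} \<Longrightarrow> \<exists>\<epsilon>>0. \<forall>t\<in>{0..r}. V t = vsol \<epsilon> as t \<and> \<epsilon> \<le> vsol \<epsilon> as t"
    using shoot by blast
  define V1 where "V1 r = - q g V r" for r
  define V2 where "V2 r = - (Fn g V r - q g V r * ((real N - 1) / r - \<mu>))" for r
  define c where "c = - Fn g V 0 / N"
  have rep: "Fn g V t = Fn (fe \<epsilon>) (vsol \<epsilon> as) t \<and> q g V t = q (fe \<epsilon>) (vsol \<epsilon> as) t \<and> V t = vsol \<epsilon> as t"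
    if r1: "r1 \<in> {0..<R}" and e: "0 < \<epsilon>" "\<forall>t\<in>{0..r1}. V t = vsol \<epsilon> as t \<and> \<epsilon> \<le> vsol \<epsilon> as t"
      and t: "t \<in> {0..r1}" for r1 \<epsilon> t
  proof -
    have Fe: "Fn g V s = Fn (fe \<epsilon>) (vsol \<epsilon> as) s" if s: "s \<in> {0..r1}" for s
      using e(2) s unfolding Fn_def fe_def by (simp add: max_absorb1)
    have "Y g V t = Y (fe \<epsilon>) (vsol \<epsilon> as) t" unfolding Y_def
      by (rule integral_cong) (use Fe t in auto)
    then show ?thesis using Fe[OF t] e(2) t unfolding q_def by auto
  qed
  have rep2: "\<exists>\<epsilon>>0. \<forall>s\<in>{0<..<r1}. Fn g V s = Fn (fe \<epsilon>) (vsol \<epsilon> as) s \<and> q g V s = q (fe \<epsilon>) (vsol \<epsilon> as) s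
        \<and> V s = vsol \<epsilon> as s"
    if r1: "r1 \<in> {0..<R}" for r1
  proof -
    obtain \<epsilon> where e: "0 < \<epsilon>" "\<forall>t\<in>{0..r1}. V t = vsol \<epsilon> as t \<and> \<epsilon> \<le> vsol \<epsilon> as t" using loc[OF r1] by blast
    show ?thesis using rep[OF r1 e] e(1) by (intro exI[of _ \<epsilon>]) auto
  qed
  have d: "(V has_real_derivative V1 r) (at r) \<and> (V1 has_real_derivative V2 r) (at r) \<and> isCont V2 r
      \<and> - (V2 r + (real N - 1) * (V1 r / r)) = p (R - r) * g (V r) + 1 + \<mu> * \<bar>V1 r\<bar>"
    if r: "0 < r" "r < R" for r
  proof -
    define r1 where "r1 = (r + R) / 2"
    have r1: "r1 \<in> {0..<R}" "r < r1" using r by (auto simp: r1_def)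
    obtain \<epsilon> where e: "0 < \<epsilon>" and eq: "\<And>s. s \<in> {0<..<r1} \<Longrightarrow> Fn g V s = Fn (fe \<epsilon>) (vsol \<epsilon> as) s \<and>
        q g V s = q (fe \<epsilon>) (vsol \<epsilon> as) s \<and> V s = vsol \<epsilon> as s"
      using rep2[OF r1(1)] by blast
    let ?f = "fe \<epsilon>" and ?w = "vsol \<epsilon> as"
    have f: "adm ?f (g \<epsilon>)" using adm_fe[OF e] .
    have s: "sol ?f as ?w" using vsol[OF e] .
    have rin: "r \<in> {0<..<r1}" using r r1 by auto
    have o: "open {0<..<r1}" by simp
    have dV: "(V has_real_derivative V1 r) (at r)"
    proof -
      have "(?w has_real_derivative - q ?f ?w r) (at r)" using sol_deriv[OF f s r] .
      then have "(V has_real_derivative - q ?f ?w r) (at r)"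
        by (rule has_field_derivative_transform_within_open[OF _ o rin]) (use eq in auto)
      then show ?thesis unfolding V1_def using eq[OF rin] by simp
    qed
    have dV1: "(V1 has_real_derivative V2 r) (at r)"
    proof -
      have "((\<lambda>s. - q ?f ?w s) has_real_derivative - (Fn ?f ?w r - q ?f ?w r * ((real N - 1) / r - \<mu>))) (at r)"
        using DERIV_minus[OF q_deriv[OF f s r]] .
      then have "(V1 has_real_derivative - (Fn ?f ?w r - q ?f ?w r * ((real N - 1) / r - \<mu>))) (at r)"
        by (rule has_field_derivative_transform_within_open[OF _ o rin]) (use eq in \<open>auto simp: V1_def\<close>)
      then show ?thesis unfolding V2_def using eq[OF rin] by simp
    qed
    have cV2: "isCont V2 r"
    proof -
      have c1: "isCont (\<lambda>s. - (Fn ?f ?w s - q ?f ?w s * ((real N - 1) / s - \<mu>))) r"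
        using r by (intro continuous_intros Fn_isCont[OF f s r] DERIV_isCont[OF q_deriv[OF f s r]]) auto
      have c2: "\<forall>\<^sub>F s in nhds r. - (Fn ?f ?w s - q ?f ?w s * ((real N - 1) / s - \<mu>)) = V2 s"
        unfolding eventually_nhds using o rin eq by (intro exI[of _ "{0<..<r1}"]) (auto simp: V2_def)
      show ?thesis using isCont_cong[OF c2] c1 by simp
    qed
    have qn: "0 \<le> q g V r" using eq[OF rin] sol_q_nonneg[OF f s] r by auto
    have "- (V2 r + (real N - 1) * (V1 r / r)) = Fn g V r + \<mu> * q g V r"
      unfolding V1_def V2_def using r by (simp add: field_simps)
    also have "\<dots> = p (R - r) * g (V r) + 1 + \<mu> * \<bar>V1 r\<bar>" using qn by (simp add: Fn_def V1_def)
    finally show ?thesis using dV dV1 cV2 by simp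
  qed
  have R2: "R / 2 \<in> {0..<R}" using Rpos by simp
  obtain \<epsilon> where e: "0 < \<epsilon>" and eq: "\<And>s. s \<in> {0..R/2} \<Longrightarrow> Fn g V s = Fn (fe \<epsilon>) (vsol \<epsilon> as) s \<and>
        q g V s = q (fe \<epsilon>) (vsol \<epsilon> as) s \<and> V s = vsol \<epsilon> as s"
  proof -
    obtain \<epsilon> where e: "0 < \<epsilon>" "\<forall>t\<in>{0..R/2}. V t = vsol \<epsilon> as t \<and> \<epsilon> \<le> vsol \<epsilon> as t" using loc[OF R2] by blast
    show ?thesis using rep[OF R2 e] e(1) that by blast
  qed
  let ?f = "fe \<epsilon>" and ?w = "vsol \<epsilon> as"
  have f: "adm ?f (g \<epsilon>)" using adm_fe[OF e] .
  have s: "sol ?f as ?w" using vsol[OF e] .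
  have ev: "\<forall>\<^sub>F r in at_right 0. 0 < r \<and> r < R / 2"
    unfolding eventually_at_right_field by (intro exI[of _ "R/2"]) (use Rpos in auto)
  have eq0: "Fn g V 0 = Fn ?f ?w 0" "V 0 = ?w 0" using eq[of 0] Rpos by auto
  have l0: "((\<lambda>r. (V r - V 0) / r) \<longlongrightarrow> 0) (at_right 0)"
  proof -
    have e1: "\<forall>\<^sub>F r in at_right 0. (?w r - ?w 0) / r = (V r - V 0) / r"
      using ev by eventually_elim (use eq eq0 in auto)
    show ?thesis using iffD1[OF tendsto_cong[OF e1] w_limit0[OF f s]] .
  qed
  have l1: "((\<lambda>r. V1 r / r) \<longlongrightarrow> c) (at_right 0)"
  proof -
    have t: "((\<lambda>r. - (q ?f ?w r / r)) \<longlongrightarrow> - (Fn ?f ?w 0 / N)) (at_right 0)"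
      by (intro tendsto_minus q_limit[OF f s])
    have cc: "- (Fn ?f ?w 0 / N) = c" unfolding c_def using eq0 by simp
    have e1: "\<forall>\<^sub>F r in at_right 0. - (q ?f ?w r / r) = V1 r / r"
      using ev by eventually_elim (use eq in \<open>auto simp: V1_def\<close>)
    show ?thesis using iffD1[OF tendsto_cong[OF e1] t] unfolding cc .
  qed
  have l2: "(V2 \<longlongrightarrow> c) (at_right 0)"
  proof -
    have t: "((\<lambda>r. - Fn ?f ?w r + (real N - 1) * (q ?f ?w r / r) - \<mu> * q ?f ?w r) \<longlongrightarrow>
        - Fn ?f ?w 0 + (real N - 1) * (Fn ?f ?w 0 / N) - \<mu> * 0) (at_right 0)"
      by (intro tendsto_diff tendsto_add tendsto_minus tendsto_mult tendsto_const q_limit[OF f s]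
          Fn_lim0[OF f s] q_lim0[OF f s])
    have cc: "- Fn ?f ?w 0 + (real N - 1) * (Fn ?f ?w 0 / N) - \<mu> * 0 = c"
      unfolding c_def using eq0 by (simp add: field_simps)
    have e1: "\<forall>\<^sub>F r in at_right 0. - Fn ?f ?w r + (real N - 1) * (q ?f ?w r / r) - \<mu> * q ?f ?w r = V2 r"
      using ev
    proof eventually_elim
      case (elim r)
      then have "r \<in> {0..R/2}" by auto
      from eq[OF this] have "Fn g V r = Fn ?f ?w r" "q g V r = q ?f ?w r" by auto
      then show ?case unfolding V2_def using elim by (simp add: algebra_simps)
    qed
    show ?thesis using iffD1[OF tendsto_cong[OF e1] t] unfolding cc .
  qed
  have at0: "- (real N * c) = p R * g (V 0) + 1" unfolding c_def Fn_def by simp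
  show ?thesis
    by (intro exI[of _ V] exI[of _ V1] exI[of _ V2] exI[of _ c] conjI Vpos Vlim l0 l1 l2 at0 allI impI)
       (use d in auto)
qed

end


lemma hoelder_cont:
  assumes h: "loc_hoelder_pos p"
  shows "continuous_on {0<..} p"
proof -
  have "isCont p t" if t: "0 < t" for t
  proof -
    obtain \<alpha> C where aC: "0 < \<alpha>" "\<alpha> \<le> 1" "0 \<le> C"
      and H: "\<And>s u. s \<in> {t/2..2*t} \<Longrightarrow> u \<in> {t/2..2*t} \<Longrightarrow> \<bar>p s - p u\<bar> \<le> C * \<bar>s - u\<bar> powr \<alpha>"
      using h[unfolded loc_hoelder_pos_def, rule_format, of "t/2" "2*t"] t by auto
    show ?thesis unfolding isCont_def LIM_eq
    proof (intro allI impI)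
      fix e :: real assume e: "0 < e"
      define d where "d = min (t / 2) ((e / (C + 1)) powr (1 / \<alpha>))"
      have d: "0 < d" using t e aC by (auto simp: d_def)
      show "\<exists>s>0. \<forall>x. x \<noteq> t \<and> norm (x - t) < s \<longrightarrow> norm (p x - p t) < e"
      proof (intro exI[of _ d] conjI allI impI)
        fix x assume x: "x \<noteq> t \<and> norm (x - t) < d"
        have "\<bar>x - t\<bar> < t / 2" using x by (simp add: d_def)
        then have "x - t < t / 2 \<and> - (x - t) < t / 2" by (simp only: abs_less_iff)
        then have "x - t < t / 2" "t - x < t / 2" by linarith+
        then have xin: "x \<in> {t/2..2*t}" using t by auto
        have tin: "t \<in> {t/2..2*t}" using t by auto
        have "\<bar>x - t\<bar> powr \<alpha> < ((e / (C + 1)) powr (1 / \<alpha>)) powr \<alpha>"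
          using x aC by (intro powr_less_mono2) (auto simp: d_def)
        also have "\<dots> = e / (C + 1)" using aC e by (simp add: powr_powr)
        finally have lt: "\<bar>x - t\<bar> powr \<alpha> < e / (C + 1)" .
        have "\<bar>p x - p t\<bar> \<le> C * \<bar>x - t\<bar> powr \<alpha>" using H[OF xin tin] .
        also have "\<dots> \<le> C * (e / (C + 1))" using lt aC by (intro mult_left_mono) auto
        also have "\<dots> < e" using aC e by (simp add: field_simps)
        finally show "norm (p x - p t) < e" by simp
      qed (use d in auto)
    qed
  qed
  then show ?thesis by (intro continuous_at_imp_continuous_on) auto
qed

theorem lemma3p2:
  fixes g p :: "real \<Rightarrow> real" and R \<mu> :: real
  assumes dim: "CARD('n::finite) \<ge> 2"
    and g_C1: "\<exists>g'. (\<forall>t>0. (g has_real_derivative g' t) (at t)) \<and> continuous_on {0<..} g'"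
    and g_pos: "\<forall>t>0. g t > 0"
    and g_decr: "\<forall>s t. 0 < s \<and> s \<le> t \<longrightarrow> g t \<le> g s"
    and g_lim: "filterlim g at_top (at_right 0)"
    and p_pos: "\<forall>t>0. p t > 0"
    and p_noninc: "\<forall>s t. 0 < s \<and> s \<le> t \<longrightarrow> p t \<le> p s"
    and p_hoelder: "loc_hoelder_pos p"
    and R_pos: "R > 0"
    and p_int: "(\<lambda>t. t * p t) integrable_on {0..1}"
    and mu_pos: "\<mu> > 0"
  shows "\<exists>(u :: real^'n \<Rightarrow> real) (Du :: real^'n \<Rightarrow> real^'n) (D2u :: real^'n \<Rightarrow> real^'n^'n).
           (\<forall>x\<in>ball 0 R. (u has_derivative (\<lambda>h. Du x \<bullet> h)) (at x)
                           \<and> (Du has_derivative (\<lambda>h. D2u x *v h)) (at x))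
         \<and> continuous_on (ball 0 R) D2u
         \<and> continuous_on (cball 0 R) u
         \<and> (\<forall>x\<in>ball 0 R. - trace_mat (D2u x) = p (R - norm x) * g (u x) + 1 + \<mu> * norm (Du x))
         \<and> (\<forall>x\<in>ball 0 R. u x > 0)
         \<and> (\<forall>x. norm x = R \<longrightarrow> u x = 0)
         \<and> (\<forall>x\<in>cball 0 R. \<forall>y\<in>cball 0 R. norm x = norm y \<longrightarrow> u x = u y)"
proof -
  obtain g' where g': "\<And>t. t > 0 \<Longrightarrow> (g has_real_derivative g' t) (at t)" "continuous_on {0<..} g'"
    using g_C1 by blast
  interpret rad g g' p R \<mu> "CARD('n)"
    by unfold_locales (use dim g' g_pos g_decr p_pos p_noninc hoelder_cont[OF p_hoelder] R_pos p_int mu_pos in auto)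
  obtain V V1 V2 c where Vpos: "\<forall>r\<in>{0..<R}. 0 < V r" and Vlim: "(V \<longlongrightarrow> 0) (at_left R)"
    and d1: "\<And>r. 0 < r \<Longrightarrow> r < R \<Longrightarrow> (V has_real_derivative V1 r) (at r)"
    and d2: "\<And>r. 0 < r \<Longrightarrow> r < R \<Longrightarrow> (V1 has_real_derivative V2 r) (at r)"
    and c2: "\<And>r. 0 < r \<Longrightarrow> r < R \<Longrightarrow> isCont V2 r"
    and l0: "((\<lambda>r. (V r - V 0) / r) \<longlongrightarrow> 0) (at_right 0)"
    and l1: "((\<lambda>r. V1 r / r) \<longlongrightarrow> c) (at_right 0)" and l2: "(V2 \<longlongrightarrow> c) (at_right 0)"
    and ode: "\<And>r. 0 < r \<Longrightarrow> r < R \<Longrightarrow> - (V2 r + (real CARD('n) - 1) * (V1 r / r)) = p (R - r) * g (V r) + 1 + \<mu> * \<bar>V1 r\<bar>"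
    and ode0: "- (real CARD('n) * c) = p R * g (V 0) + 1"
    using final1D by blast
  define Vf where "Vf r = (if r < R then V r else 0)" for r
  have VfV: "\<forall>\<^sub>F s in nhds r. Vf s = V s" if "r < R" for r
    unfolding eventually_nhds using that by (intro exI[of _ "{..<R}"]) (auto simp: Vf_def)
  have d1f: "(Vf has_real_derivative V1 r) (at r)" if r: "0 < r" "r < R" for r
    by (rule has_field_derivative_transform_within_open[OF d1[OF r], of "{..<R}"]) (use r in \<open>auto simp: Vf_def\<close>)
  have l0f: "((\<lambda>r. (Vf r - Vf 0) / r) \<longlongrightarrow> 0) (at_right 0)"
  proof -
    have e1: "\<forall>\<^sub>F r in at_right 0. (V r - V 0) / r = (Vf r - Vf 0) / r"
      unfolding eventually_at_right_field by (intro exI[of _ R]) (use R_pos in \<open>auto simp: Vf_def\<close>)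
    show ?thesis using iffD1[OF tendsto_cong[OF e1] l0] .
  qed
  define u where "u = (radu Vf :: real^'n \<Rightarrow> real)"
  define Du where "Du = (radDu V1 :: real^'n \<Rightarrow> real^'n)"
  define D2u where "D2u = (radD2u V1 V2 c :: real^'n \<Rightarrow> real^'n^'n)"
  have der: "(u has_derivative (\<lambda>h. Du x \<bullet> h)) (at x) \<and> (Du has_derivative (\<lambda>h. D2u x *v h)) (at x)"
    if x: "x \<in> ball 0 R" for x
  proof (cases "x = 0")
    case True
    show ?thesis unfolding u_def Du_def D2u_def True using ND2[OF l0f] ND4[OF l1] by blast
  next
    case False
    have r: "0 < norm x" "norm x < R" using x False by auto
    show ?thesis unfolding u_def Du_def D2u_def using ND1[of x Vf V1, OF False d1f[OF r]]
      ND3[of x V1 V2 c, OF False d2[OF r]] by blast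
  qed
  have cont2: "continuous_on (ball 0 R) D2u" unfolding D2u_def by (rule ND5[OF d2 c2 l1 l2])
  have Vfc: "continuous_on {0..R} Vf"
    unfolding continuous_on_eq_continuous_within
  proof
    fix r assume r: "r \<in> {0..R}"
    show "continuous (at r within {0..R}) Vf"
    proof (cases "r = 0")
      case True
      have t1: "((\<lambda>s. (Vf s - Vf 0) / s * s) \<longlongrightarrow> 0 * 0) (at_right 0)"
        by (intro tendsto_mult l0f tendsto_ident_at)
      have e1: "\<forall>\<^sub>F s in at_right 0. (Vf s - Vf 0) / s * s = Vf s - Vf 0"
        unfolding eventually_at_right_field by (intro exI[of _ 1]) auto
      have "((\<lambda>s. Vf s - Vf 0) \<longlongrightarrow> 0 * 0) (at_right 0)" using iffD1[OF tendsto_cong[OF e1] t1] .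
      then have "((\<lambda>s. Vf s - Vf 0) \<longlongrightarrow> 0) (at_right 0)" by simp
      then have t2: "(Vf \<longlongrightarrow> Vf 0) (at_right 0)" by (simp add: LIM_zero_iff)
      show ?thesis unfolding True continuous_within at_within_Icc_at_right[OF R_pos] by (rule t2)
    next
      case False
      show ?thesis
      proof (cases "r = R")
        case True
        have e1: "\<forall>\<^sub>F s in at_left R. V s = Vf s"
          unfolding eventually_at_left_field by (intro exI[of _ 0]) (use R_pos in \<open>auto simp: Vf_def\<close>)
        have t3: "(Vf \<longlongrightarrow> 0) (at_left R)" using iffD1[OF tendsto_cong[OF e1] Vlim] .
        have vr: "Vf R = 0" by (simp add: Vf_def)
        show ?thesis unfolding True continuous_within at_within_Icc_at_left[OF R_pos] vr by (rule t3)
      next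
        case False
        then have r': "0 < r" "r < R" using r \<open>r \<noteq> 0\<close> by auto
        have i1: "isCont V r" using DERIV_isCont[OF d1[OF r']] .
        have "isCont Vf r = isCont V r" by (rule isCont_cong[OF VfV[OF r'(2)]])
        then have "isCont Vf r" using i1 by simp
        then show ?thesis by (rule continuous_at_imp_continuous_within)
      qed
    qed
  qed
  have ucont: "continuous_on (cball 0 R) u"
  proof -
    have "continuous_on (cball 0 R) (\<lambda>x::real^'n. norm x)" by (intro continuous_intros)
    moreover have "(\<lambda>x::real^'n. norm x) ` cball 0 R \<subseteq> {0..R}" by auto
    ultimately show ?thesis unfolding u_def radu_def[abs_def]
      using continuous_on_compose2[OF Vfc] by blast
  qed
  have pde: "- trace_mat (D2u x) = p (R - norm x) * g (u x) + 1 + \<mu> * norm (Du x)" if x: "x \<in> ball 0 R" for x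
  proof (cases "x = 0")
    case True
    then show ?thesis unfolding D2u_def u_def Du_def using ND6[of V1 V2 c x] ode0 R_pos
      by (simp add: radu_def radDu_def Vf_def)
  next
    case False
    have r: "0 < norm x" "norm x < R" using x False by auto
    have nd: "norm (Du x) = \<bar>V1 (norm x)\<bar>" unfolding Du_def radDu_def using r by (simp add: abs_div)
    show ?thesis unfolding nd using ND6[of V1 V2 c x] ode[OF r] False r
      by (simp add: D2u_def u_def radu_def Vf_def)
  qed
  have upos: "u x > 0" if "x \<in> ball 0 R" for x
    using Vpos that by (simp add: u_def radu_def Vf_def)
  have ubd: "u x = 0" if "norm x = R" for x
    using that by (simp add: u_def radu_def Vf_def)
  have urad: "u x = u y" if "norm x = norm y" for x y
    using that by (simp add: u_def radu_def)
  have A: "\<forall>x\<in>ball 0 R. (u has_derivative (\<lambda>h. Du x \<bullet> h)) (at x) \<and> (Du has_derivative (\<lambda>h. D2u x *v h)) (at x)"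
    using der by blast
  have B: "\<forall>x\<in>ball 0 R. - trace_mat (D2u x) = p (R - norm x) * g (u x) + 1 + \<mu> * norm (Du x)"
    using pde by blast
  have C: "\<forall>x\<in>ball 0 R. u x > 0" using upos by blast
  have D: "\<forall>x. norm x = R \<longrightarrow> u x = 0" using ubd by blast
  have E: "\<forall>x\<in>cball 0 R. \<forall>y\<in>cball 0 R. norm x = norm y \<longrightarrow> u x = u y" using urad by blast
  show ?thesis
    apply (rule exI[of _ u], rule exI[of _ Du], rule exI[of _ D2u])
    using A cont2 ucont B C D E by (intro conjI)
qed


end
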